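(* Let $T$ be a complete o-minimal theory expanding the theory of real closed ordered fields, let $(\mathbb{E},\mathcal{O})\models T_{\mathrm{convex}}$, let $\mathbb{U}\succ\mathbb{E}$, and let $b\in\mathbb{U}\setminus\mathbb{E}$ satisfy $\mathcal{O}<b<\mathbb{E}^{>\mathcal{O}}$. Let $f:\mathbb{U}\to\mathbb{U}$ be $\mathbb{E}$-definable. If $f(b)\in\mathfrak{o}_b$, then $f'(b)\in\mathfrak{o}_b$. If $f(b)\in\mathfrak{o}_b^-$, then $f'(b)\in\mathfrak{o}_b^-$.
   Context: $T_{\mathrm{convex}}$ is the theory of pairs $(\mathbb{E},\mathcal{O})$ with $\mathbb{E}\models T$ and $\mathcal{O}\ne\mathbb{E}$ a convex subring closed under all continuous $\emptyset$-definable functions. $\mathcal{O}<b<\mathbb{E}^{>\mathcal{O}}$ means $b$ exceeds every element of $\mathcal{O}$ and is smaller than every element of $\mathbb{E}$ exceeding all of $\mathcal{O}$. With $\mathbb{E}\langle b\rangle$ the $T$-definable closure of $\mathbb{E}\cup\{b\}$ in $\mathbb{U}$: $\mathcal{O}_b:=\{y\in\mathbb{E}\langle b\rangle:|y|<e\text{ for all }e\in\mathbb{E}^{>\mathcal{O}}\}$, $\mathcal{O}_b^-$ the convex hull of $\mathcal{O}$ in $\mathbb{E}\langle b\rangle$, and $\mathfrak{o}_b,\mathfrak{o}_b^-$ their respective maximal ideals. *)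

theory Defs
  imports Main
begin

text \<open>First-order formulas over a relational signature 'r, de Bruijn variables.
  (Any first-order language is interdefinable with a relational one.)\<close>
datatype 'r fm = Rel 'r "nat list" | Eq nat nat | Neg "'r fm" | Conj "'r fm" "'r fm" | Ex "'r fm"

definition cons_env :: "'a \<Rightarrow> (nat \<Rightarrow> 'a) \<Rightarrow> nat \<Rightarrow> 'a" where
  "cons_env x v n = (case n of 0 \<Rightarrow> x | Suc m \<Rightarrow> v m)"

definition list_env :: "'a list \<Rightarrow> (nat \<Rightarrow> 'a) \<Rightarrow> nat \<Rightarrow> 'a" where
  "list_env xs v n = (if n < length xs then xs ! n else v (n - length xs))"

fun sat :: "'u set \<Rightarrow> ('r \<Rightarrow> 'u list \<Rightarrow> bool) \<Rightarrow> 'r fm \<Rightarrow> (nat \<Rightarrow> 'u) \<Rightarrow> bool" where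
  "sat D I (Rel r xs) v = I r (map v xs)"
| "sat D I (Eq i j) v = (v i = v j)"
| "sat D I (Neg \<phi>) v = (\<not> sat D I \<phi> v)"
| "sat D I (Conj \<phi> \<psi>) v = (sat D I \<phi> v \<and> sat D I \<psi> v)"
| "sat D I (Ex \<phi>) v = (\<exists>x\<in>D. sat D I \<phi> (cons_env x v))"

fun fv :: "'r fm \<Rightarrow> nat set" where
  "fv (Rel r xs) = set xs"
| "fv (Eq i j) = {i, j}"
| "fv (Neg \<phi>) = fv \<phi>"
| "fv (Conj \<phi> \<psi>) = fv \<phi> \<union> fv \<psi>"
| "fv (Ex \<phi>) = {n. Suc n \<in> fv \<phi>}"

text \<open>A k-ary relation P on D is definable in (D,I) with parameters from A:
  variables 0..k-1 are the arguments, the remaining free variables are parameters from A.\<close>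
definition definable_rel :: "'u set \<Rightarrow> ('r \<Rightarrow> 'u list \<Rightarrow> bool) \<Rightarrow> 'u set \<Rightarrow> nat \<Rightarrow> ('u list \<Rightarrow> bool) \<Rightarrow> bool" where
  "definable_rel D I A k P \<longleftrightarrow>
     (\<exists>(\<phi>::'r fm) v. range v \<subseteq> D \<and> (\<forall>n. k + n \<in> fv \<phi> \<longrightarrow> v n \<in> A) \<and>
        (\<forall>xs. length xs = k \<and> set xs \<subseteq> D \<longrightarrow> (sat D I \<phi> (list_env xs v) \<longleftrightarrow> P xs)))"

definition definable_set :: "'u set \<Rightarrow> ('r \<Rightarrow> 'u list \<Rightarrow> bool) \<Rightarrow> 'u set \<Rightarrow> 'u set \<Rightarrow> bool" where
  "definable_set D I A X \<longleftrightarrow> X \<subseteq> D \<and> definable_rel D I A 1 (\<lambda>xs. xs ! 0 \<in> X)"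

definition definable_fun :: "'u set \<Rightarrow> ('r \<Rightarrow> 'u list \<Rightarrow> bool) \<Rightarrow> 'u set \<Rightarrow> ('u \<Rightarrow> 'u) \<Rightarrow> bool" where
  "definable_fun D I A f \<longleftrightarrow> f ` D \<subseteq> D \<and> definable_rel D I A 2 (\<lambda>xs. xs ! 1 = f (xs ! 0))"

definition elementary_sub :: "('r \<Rightarrow> 'u list \<Rightarrow> bool) \<Rightarrow> 'u set \<Rightarrow> bool" where
  "elementary_sub I E \<longleftrightarrow> E \<noteq> {} \<and>
     (\<forall>(\<phi>::'r fm) v. range v \<subseteq> E \<longrightarrow> (sat E I \<phi> v \<longleftrightarrow> sat UNIV I \<phi> v))"

definition basic_interval :: "('u::linorder) set \<Rightarrow> 'u set \<Rightarrow> bool" where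
  "basic_interval D J \<longleftrightarrow>
     (\<exists>a\<in>D. J = {a}) \<or> (\<exists>a\<in>D. \<exists>c\<in>D. J = {x\<in>D. a < x \<and> x < c}) \<or>
     (\<exists>a\<in>D. J = {x\<in>D. a < x}) \<or> (\<exists>c\<in>D. J = {x\<in>D. x < c}) \<or> J = D"

definition o_minimal :: "('u::linorder) set \<Rightarrow> ('r \<Rightarrow> 'u list \<Rightarrow> bool) \<Rightarrow> bool" where
  "o_minimal D I \<longleftrightarrow> (\<forall>X. definable_set D I D X \<longrightarrow>
      (\<exists>F. finite F \<and> X = \<Union>F \<and> (\<forall>J\<in>F. basic_interval D J)))"

definition continuous_on_dom :: "('u::linordered_field) set \<Rightarrow> ('u \<Rightarrow> 'u) \<Rightarrow> bool" where
  "continuous_on_dom D f \<longleftrightarrow> (\<forall>x\<in>D. \<forall>\<epsilon>\<in>D. \<epsilon> > 0 \<longrightarrow>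
      (\<exists>\<delta>\<in>D. \<delta> > 0 \<and> (\<forall>y\<in>D. \<bar>y - x\<bar> < \<delta> \<longrightarrow> \<bar>f y - f x\<bar> < \<epsilon>)))"

definition T_convex :: "('r \<Rightarrow> ('u::linordered_field) list \<Rightarrow> bool) \<Rightarrow> 'u set \<Rightarrow> 'u set \<Rightarrow> bool" where
  "T_convex I E Ov \<longleftrightarrow> Ov \<subseteq> E \<and> Ov \<noteq> E \<and> 0 \<in> Ov \<and> 1 \<in> Ov \<and>
     (\<forall>x\<in>Ov. \<forall>y\<in>Ov. x + y \<in> Ov \<and> x - y \<in> Ov \<and> x * y \<in> Ov) \<and>
     (\<forall>x\<in>Ov. \<forall>y\<in>Ov. \<forall>z\<in>E. x \<le> z \<and> z \<le> y \<longrightarrow> z \<in> Ov) \<and>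
     (\<forall>f. definable_fun E I {} f \<and> continuous_on_dom E f \<longrightarrow> f ` Ov \<subseteq> Ov)"

definition dcl :: "('r \<Rightarrow> 'u list \<Rightarrow> bool) \<Rightarrow> 'u set \<Rightarrow> 'u set" where
  "dcl I A = {y. definable_rel UNIV I A 1 (\<lambda>xs. xs ! 0 = y)}"

definition Ob :: "('r \<Rightarrow> ('u::linordered_field) list \<Rightarrow> bool) \<Rightarrow> 'u set \<Rightarrow> 'u set \<Rightarrow> 'u \<Rightarrow> 'u set" where
  "Ob I E Ov b = {y \<in> dcl I (insert b E). \<forall>e\<in>E. (\<forall>u\<in>Ov. u < e) \<longrightarrow> \<bar>y\<bar> < e}"

definition Ob_minus :: "('r \<Rightarrow> ('u::linordered_field) list \<Rightarrow> bool) \<Rightarrow> 'u set \<Rightarrow> 'u set \<Rightarrow> 'u \<Rightarrow> 'u set" where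
  "Ob_minus I E Ov b = {y \<in> dcl I (insert b E). \<exists>o1\<in>Ov. \<exists>o2\<in>Ov. o1 \<le> y \<and> y \<le> o2}"

text \<open>Maximal ideal of a local ring R: its non-units.\<close>
definition max_ideal :: "('u::field) set \<Rightarrow> 'u set" where
  "max_ideal R = {y \<in> R. \<forall>z\<in>R. y * z \<noteq> 1}"

definition has_deriv_at :: "(('u::linordered_field) \<Rightarrow> 'u) \<Rightarrow> 'u \<Rightarrow> 'u \<Rightarrow> bool" where
  "has_deriv_at f b d \<longleftrightarrow> (\<forall>\<epsilon>>0. \<exists>\<delta>>0. \<forall>x. x \<noteq> b \<and> \<bar>x - b\<bar> < \<delta> \<longrightarrow>
      \<bar>(f x - f b) / (x - b) - d\<bar> < \<epsilon>)"

end

theory Submission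
  imports Defs
begin

definition liftr :: "(nat \<Rightarrow> nat) \<Rightarrow> nat \<Rightarrow> nat" where
  "liftr \<sigma> n = (case n of 0 \<Rightarrow> 0 | Suc m \<Rightarrow> Suc (\<sigma> m))"

fun ren :: "(nat \<Rightarrow> nat) \<Rightarrow> 'r fm \<Rightarrow> 'r fm" where
  "ren \<sigma> (Rel r xs) = Rel r (map \<sigma> xs)"
| "ren \<sigma> (Eq i j) = Eq (\<sigma> i) (\<sigma> j)"
| "ren \<sigma> (Neg \<phi>) = Neg (ren \<sigma> \<phi>)"
| "ren \<sigma> (Conj \<phi> \<psi>) = Conj (ren \<sigma> \<phi>) (ren \<sigma> \<psi>)"
| "ren \<sigma> (Ex \<phi>) = Ex (ren (liftr \<sigma>) \<phi>)"

lemma cons_env_liftr: "cons_env x v (liftr \<sigma> a) = cons_env x (\<lambda>a. v (\<sigma> a)) a"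
  by (simp add: cons_env_def liftr_def split: nat.splits)

lemma sat_ren: "sat D I (ren \<sigma> \<phi>) v = sat D I \<phi> (v \<circ> \<sigma>)"
proof (induction \<phi> arbitrary: \<sigma> v)
  case (Ex \<phi>)
  then show ?case by (simp add: cons_env_liftr)
qed auto

lemma fv_ren: "fv (ren \<sigma> \<phi>) = \<sigma> ` fv \<phi>"
proof (induction \<phi> arbitrary: \<sigma>)
  case (Ex \<phi>)
  have "fv (ren \<sigma> (Ex \<phi>)) = {n. Suc n \<in> liftr \<sigma> ` fv \<phi>}" using Ex by simp
  also have "\<dots> = \<sigma> ` {n. Suc n \<in> fv \<phi>}"
  proof (rule set_eqI, rule iffI)
    fix n assume "n \<in> {n. Suc n \<in> liftr \<sigma> ` fv \<phi>}"
    then obtain m where m: "m \<in> fv \<phi>" "Suc n = liftr \<sigma> m" by auto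
    then obtain k where "m = Suc k" by (cases m) (auto simp: liftr_def)
    with m show "n \<in> \<sigma> ` {n. Suc n \<in> fv \<phi>}" by (auto simp: liftr_def)
  next
    fix n assume "n \<in> \<sigma> ` {n. Suc n \<in> fv \<phi>}"
    then obtain k where "Suc k \<in> fv \<phi>" "n = \<sigma> k" by auto
    then have "Suc n = liftr \<sigma> (Suc k)" by (simp add: liftr_def)
    with \<open>Suc k \<in> fv \<phi>\<close> show "n \<in> {n. Suc n \<in> liftr \<sigma> ` fv \<phi>}" by auto
  qed
  finally show ?case by simp
qed auto

lemma sat_cong: "(\<And>n. n \<in> fv \<phi> \<Longrightarrow> v n = v' n) \<Longrightarrow> sat D I \<phi> v = sat D I \<phi> v'"
proof (induction \<phi> arbitrary: v v')
  case (Rel r xs)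
  have "\<And>n. n \<in> set xs \<Longrightarrow> v n = v' n" using Rel.prems by (metis fv.simps(1))
  then have "map v xs = map v' xs" by (metis map_eq_conv)
  then show ?case by (simp only: sat.simps)
next
  case (Eq i j)
  have "v i = v' i" "v j = v' j" using Eq.prems by auto
  then show ?case by (simp only: sat.simps)
next
  case (Neg \<phi>)
  have "sat D I \<phi> v = sat D I \<phi> v'" by (rule Neg.IH, rule Neg.prems) simp
  then show ?case by (simp only: sat.simps)
next
  case (Conj \<phi> \<psi>)
  have "sat D I \<phi> v = sat D I \<phi> v'" by (rule Conj.IH(1), rule Conj.prems) simp
  moreover have "sat D I \<psi> v = sat D I \<psi> v'" by (rule Conj.IH(2), rule Conj.prems) simp
  ultimately show ?case by (simp only: sat.simps)
next
  case (Ex \<phi>)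
  have "\<And>x. sat D I \<phi> (cons_env x v) = sat D I \<phi> (cons_env x v')"
  proof (rule Ex.IH)
    fix x n assume "n \<in> fv \<phi>"
    show "cons_env x v n = cons_env x v' n"
    proof (cases n)
      case 0 then show ?thesis by (simp add: cons_env_def)
    next
      case (Suc m)
      have "v m = v' m" by (rule Ex.prems) (use Suc \<open>n \<in> fv \<phi>\<close> in simp)
      with Suc show ?thesis by (simp add: cons_env_def)
    qed
  qed
  then show ?case by (simp only: sat.simps)
qed

lemma finite_fv: "finite (fv \<phi>)"
proof (induction \<phi>)
  case (Ex \<phi>)
  have "{n. Suc n \<in> fv \<phi>} \<subseteq> (\<lambda>n. n - 1) ` fv \<phi>"
  proof
    fix n assume "n \<in> {n. Suc n \<in> fv \<phi>}"
    then have "Suc n \<in> fv \<phi>" by simp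
    then show "n \<in> (\<lambda>n. n - 1) ` fv \<phi>" by (rule rev_image_eqI) simp
  qed
  then show ?case using Ex finite_subset by (simp add: finite_subset)
qed auto

lemma cons_env_0[simp]: "cons_env x w 0 = x" and cons_env_Suc[simp]: "cons_env x w (Suc n) = w n"
  by (simp_all add: cons_env_def)

lemma list_env_Nil[simp]: "list_env [] w = w"
  by (rule ext) (simp add: list_env_def)

lemma list_env_app1: "list_env (ps1@ps2) w (if n < length ps1 then n else n + length ps2) = list_env ps1 w n"
  by (simp add: list_env_def nth_append)

lemma list_env_app2: "list_env (ps1@ps2) w (if n < length ps2 then length ps1 + n else n + length ps1) = list_env ps2 w n"
  by (simp add: list_env_def nth_append)

lemma list_env_ex: "cons_env x (list_env ps w) (if n < length ps then Suc n else if n = length ps then 0 else n)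
   = list_env ps (cons_env x w) n"
proof -
  consider "n < length ps" | "n = length ps" | "n > length ps" by linarith
  then show ?thesis
  proof cases
    case 3
    then obtain m where "n = Suc m" by (cases n) auto
    with 3 show ?thesis by (simp add: list_env_def cons_env_def Suc_diff_le split: nat.splits)
  qed (simp_all add: list_env_def)
qed

lemma list_env_subst: "list_env ps w (if n < length ps then n else length ps + \<sigma> (n - length ps)) = list_env ps (\<lambda>n. w (\<sigma> n)) n"
  by (simp add: list_env_def)

locale omin =
  fixes I :: "'r \<Rightarrow> ('u::linordered_field) list \<Rightarrow> bool"
  assumes lt_def: "definable_rel UNIV I {} 2 (\<lambda>xs. xs ! 0 < xs ! 1)"
    and add_def: "definable_rel UNIV I {} 3 (\<lambda>xs. xs ! 2 = xs ! 0 + xs ! 1)"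
    and mult_def: "definable_rel UNIV I {} 3 (\<lambda>xs. xs ! 2 = xs ! 0 * xs ! 1)"
    and omin_U: "o_minimal UNIV I"
begin

definition dfn :: "'u set \<Rightarrow> ((nat \<Rightarrow> 'u) \<Rightarrow> bool) \<Rightarrow> bool" where
  "dfn A P \<longleftrightarrow> (\<exists>(\<phi>::'r fm) ps. set ps \<subseteq> A \<and> (\<forall>w. P w = sat UNIV I \<phi> (list_env ps w)))"

lemma dfn_cong: "dfn A P \<Longrightarrow> (\<And>w. P w = Q w) \<Longrightarrow> dfn A Q"
proof -
  assume "dfn A P" "\<And>w. P w = Q w"
  then have "P = Q" by (intro ext) simp
  with \<open>dfn A P\<close> show ?thesis by simp
qed

lemma dfn_mono: "dfn A P \<Longrightarrow> A \<subseteq> B \<Longrightarrow> dfn B P"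
  unfolding dfn_def by blast

lemma dfn_neg: "dfn A P \<Longrightarrow> dfn A (\<lambda>w. \<not> P w)"
  unfolding dfn_def
proof (elim exE conjE)
  fix \<phi> :: "'r fm" and ps assume "set ps \<subseteq> A" "\<forall>w. P w = sat UNIV I \<phi> (list_env ps w)"
  then show "\<exists>(\<phi>::'r fm) ps. set ps \<subseteq> A \<and> (\<forall>w. (\<not> P w) = sat UNIV I \<phi> (list_env ps w))"
    by (intro exI[of _ "Neg \<phi>"] exI[of _ ps]) simp
qed

lemma dfn_conj: "dfn A P \<Longrightarrow> dfn A Q \<Longrightarrow> dfn A (\<lambda>w. P w \<and> Q w)"
  unfolding dfn_def
proof (elim exE conjE)
  fix \<phi>1 \<phi>2 :: "'r fm" and ps1 ps2
  assume h: "set ps1 \<subseteq> A" "\<forall>w. P w = sat UNIV I \<phi>1 (list_env ps1 w)"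
     "set ps2 \<subseteq> A" "\<forall>w. Q w = sat UNIV I \<phi>2 (list_env ps2 w)"
  define \<sigma>1 where "\<sigma>1 = (\<lambda>n. if n < length ps1 then n else n + length ps2)"
  define \<sigma>2 where "\<sigma>2 = (\<lambda>n. if n < length ps2 then length ps1 + n else n + length ps1)"
  have e1: "(list_env (ps1@ps2) w \<circ> \<sigma>1) = list_env ps1 w" for w
    by (rule ext) (simp only: comp_def \<sigma>1_def list_env_app1)
  have e2: "(list_env (ps1@ps2) w \<circ> \<sigma>2) = list_env ps2 w" for w
    by (rule ext) (simp only: comp_def \<sigma>2_def list_env_app2)
  show "\<exists>(\<phi>::'r fm) ps. set ps \<subseteq> A \<and> (\<forall>w. (P w \<and> Q w) = sat UNIV I \<phi> (list_env ps w))"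
    by (intro exI[of _ "Conj (ren \<sigma>1 \<phi>1) (ren \<sigma>2 \<phi>2)"] exI[of _ "ps1@ps2"])
       (simp add: sat_ren e1 e2 h)
qed

lemma dfn_ex: "dfn A P \<Longrightarrow> dfn A (\<lambda>w. \<exists>x. P (cons_env x w))"
  unfolding dfn_def
proof (elim exE conjE)
  fix \<phi> :: "'r fm" and ps assume h: "set ps \<subseteq> A" "\<forall>w. P w = sat UNIV I \<phi> (list_env ps w)"
  define \<sigma> where "\<sigma> = (\<lambda>n. if n < length ps then Suc n else if n = length ps then 0 else n)"
  have e: "(cons_env x (list_env ps w) \<circ> \<sigma>) = list_env ps (cons_env x w)" for x w
    by (rule ext) (simp only: comp_def \<sigma>_def list_env_ex)
  show "\<exists>(\<phi>::'r fm) ps. set ps \<subseteq> A \<and> (\<forall>w. (\<exists>x. P (cons_env x w)) = sat UNIV I \<phi> (list_env ps w))"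
    by (intro exI[of _ "Ex (ren \<sigma> \<phi>)"] exI[of _ ps]) (simp add: sat_ren e h)
qed

lemma dfn_subst: "dfn A P \<Longrightarrow> dfn A (\<lambda>w. P (\<lambda>n. w (\<sigma> n)))"
  unfolding dfn_def
proof (elim exE conjE)
  fix \<phi> :: "'r fm" and ps assume h: "set ps \<subseteq> A" "\<forall>w. P w = sat UNIV I \<phi> (list_env ps w)"
  define \<tau> where "\<tau> = (\<lambda>n. if n < length ps then n else length ps + \<sigma> (n - length ps))"
  have e: "(list_env ps w \<circ> \<tau>) = list_env ps (\<lambda>n. w (\<sigma> n))" for w
    by (rule ext) (simp only: comp_def \<tau>_def list_env_subst)
  show "\<exists>(\<phi>::'r fm) ps. set ps \<subseteq> A \<and> (\<forall>w. P (\<lambda>n. w (\<sigma> n)) = sat UNIV I \<phi> (list_env ps w))"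
    by (intro exI[of _ "ren \<tau> \<phi>"] exI[of _ ps]) (simp add: sat_ren e h)
qed

lemma dfn_eq: "dfn A (\<lambda>w. w i = w j)"
  unfolding dfn_def by (intro exI[of _ "Eq i j"] exI[of _ "[]"]) simp

lemma dfn_param: "a \<in> A \<Longrightarrow> dfn A (\<lambda>w. w 0 = a)"
  unfolding dfn_def by (intro exI[of _ "Eq 1 0"] exI[of _ "[a]"]) (auto simp: list_env_def)

lemma dfn_of_rel0:
  assumes "definable_rel UNIV I {} k Q"
  shows "dfn A (\<lambda>w. Q (map w [0..<k]))"
proof -
  obtain \<phi> :: "'r fm" and v where h: "\<forall>n. k + n \<in> fv \<phi> \<longrightarrow> v n \<in> {}"
    "\<forall>xs. length xs = k \<and> set xs \<subseteq> UNIV \<longrightarrow> (sat UNIV I \<phi> (list_env xs v) \<longleftrightarrow> Q xs)"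
    using assms unfolding definable_rel_def by blast
  have fvk: "n \<in> fv \<phi> \<Longrightarrow> n < k" for n
    using h(1)[rule_format, of "n - k"] by (cases "n < k") auto
  have "Q (map w [0..<k]) = sat UNIV I \<phi> (list_env [] w)" for w
  proof -
    have "Q (map w [0..<k]) = sat UNIV I \<phi> (list_env (map w [0..<k]) v)" using h(2) by simp
    also have "\<dots> = sat UNIV I \<phi> w"
      by (rule sat_cong) (simp add: list_env_def fvk)
    finally show ?thesis by simp
  qed
  then show ?thesis unfolding dfn_def by (intro exI[of _ \<phi>] exI[of _ "[]"]) simp
qed

lemma dfn_of_rel:
  assumes "definable_rel UNIV I A k Q" and "A \<noteq> {}"
  shows "dfn A (\<lambda>w. Q (map w [0..<k]))"
proof -
  obtain \<phi> :: "'r fm" and v where h: "\<forall>n. k + n \<in> fv \<phi> \<longrightarrow> v n \<in> A"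
    "\<forall>xs. length xs = k \<and> set xs \<subseteq> UNIV \<longrightarrow> (sat UNIV I \<phi> (list_env xs v) \<longleftrightarrow> Q xs)"
    using assms unfolding definable_rel_def by blast
  define l where "l = Max (insert 0 (fv \<phi>)) + 1"
  have fvl: "n \<in> fv \<phi> \<Longrightarrow> n < k + l" for n
  proof -
    assume n: "n \<in> fv \<phi>"
    have "n \<le> Max (insert 0 (fv \<phi>))" using n finite_fv[of \<phi>] by (intro Max_ge) auto
    then show ?thesis unfolding l_def by linarith
  qed
  define ps where "ps = map (\<lambda>i. if k + i \<in> fv \<phi> then v i else (SOME a. a \<in> A)) [0..<l]"
  have psA: "set ps \<subseteq> A"
    unfolding ps_def using h(1) some_in_eq assms(2) by auto
  have lps: "length ps = l" by (simp add: ps_def)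
  define \<tau> where "\<tau> = (\<lambda>n. if n < k then l + n else n - k)"
  have "Q (map w [0..<k]) = sat UNIV I (ren \<tau> \<phi>) (list_env ps w)" for w
  proof -
    have "Q (map w [0..<k]) = sat UNIV I \<phi> (list_env (map w [0..<k]) v)" using h(2) by simp
    also have "\<dots> = sat UNIV I \<phi> (list_env ps w \<circ> \<tau>)"
    proof (rule sat_cong)
      fix n assume n: "n \<in> fv \<phi>"
      show "list_env (map w [0..<k]) v n = (list_env ps w \<circ> \<tau>) n"
      proof (cases "n < k")
        case True then show ?thesis by (simp add: list_env_def \<tau>_def lps)
      next
        case False
        then have "n - k < l" "k + (n - k) = n" using fvl[OF n] by auto
        then show ?thesis using False n by (simp add: list_env_def \<tau>_def lps ps_def)
      qed
    qed
    finally show ?thesis by (simp add: sat_ren)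
  qed
  then show ?thesis unfolding dfn_def using psA by blast
qed

lemma rel_of_dfn1:
  assumes "dfn A (\<lambda>w. Q (w 0))"
  shows "definable_rel UNIV I A 1 (\<lambda>xs. Q (xs ! 0))"
proof -
  obtain \<phi> :: "'r fm" and ps where h: "set ps \<subseteq> A" "\<forall>w. Q (w 0) = sat UNIV I \<phi> (list_env ps w)"
    using assms unfolding dfn_def by blast
  define l where "l = length ps"
  define \<tau> where "\<tau> = (\<lambda>n. if n < l then Suc n else (0::nat))"
  define v where "v = (\<lambda>n. if n < l then ps ! n else undefined)"
  have par: "\<forall>n. 1 + n \<in> fv (ren \<tau> \<phi>) \<longrightarrow> v n \<in> A"
  proof (intro allI impI)
    fix n assume "1 + n \<in> fv (ren \<tau> \<phi>)"
    then obtain m where "m \<in> fv \<phi>" "1 + n = \<tau> m" by (auto simp: fv_ren)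
    then have "n < l" by (auto simp: \<tau>_def split: if_splits)
    then show "v n \<in> A" using h(1) by (auto simp: v_def l_def)
  qed
  have "sat UNIV I (ren \<tau> \<phi>) (list_env xs v) = Q (xs ! 0)" if "length xs = 1" for xs
  proof -
    have "(list_env xs v \<circ> \<tau>) = list_env ps (\<lambda>_. xs ! 0)"
      by (rule ext) (use that in \<open>auto simp: list_env_def \<tau>_def v_def l_def\<close>)
    then show ?thesis using h(2)[rule_format, of "\<lambda>_. xs ! 0"] by (simp add: sat_ren)
  qed
  then show ?thesis unfolding definable_rel_def using par by blast
qed

end

context omin begin

definition dterm :: "'u set \<Rightarrow> ((nat \<Rightarrow> 'u) \<Rightarrow> 'u) \<Rightarrow> bool" where
  "dterm A t \<longleftrightarrow> dfn A (\<lambda>w. w 0 = t (\<lambda>n. w (Suc n)))"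

lemma dterm_var: "dterm A (\<lambda>w. w i)"
  unfolding dterm_def by (rule dfn_eq)

lemma dterm_param: "a \<in> A \<Longrightarrow> dterm A (\<lambda>w. a)"
  unfolding dterm_def by (rule dfn_param)

lemma dterm_subst: "dterm A t \<Longrightarrow> dterm A (\<lambda>w. t (\<lambda>n. w (\<sigma> n)))"
  unfolding dterm_def
  by (drule dfn_subst[where \<sigma>="\<lambda>n. case n of 0 \<Rightarrow> 0 | Suc m \<Rightarrow> Suc (\<sigma> m)"]) simp

lemma dfn_ex': "dfn A (\<lambda>w. Q (w 0) (\<lambda>n. w (Suc n))) \<Longrightarrow> dfn A (\<lambda>w. \<exists>x. Q x w)"
proof -
  assume "dfn A (\<lambda>w. Q (w 0) (\<lambda>n. w (Suc n)))"
  then have "dfn A (\<lambda>w. \<exists>x. Q (cons_env x w 0) (\<lambda>n. cons_env x w (Suc n)))" by (rule dfn_ex)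
  then show ?thesis by (rule dfn_cong) (simp add: eta_contract_eq)
qed

lemma dfn_rel3:
  assumes R: "dfn A (\<lambda>w. R (w 0) (w 1) (w 2))" and t: "dterm A t1" "dterm A t2" "dterm A t3"
  shows "dfn A (\<lambda>w. R (t1 w) (t2 w) (t3 w))"
proof -
  have a1: "dfn A (\<lambda>w. w 2 = t1 (\<lambda>n. w (Suc (Suc (Suc n)))))"
    using dfn_subst[OF t(1)[unfolded dterm_def], where \<sigma>="\<lambda>n. if n = 0 then 2 else n + 2"] by simp
  have a2: "dfn A (\<lambda>w. w 1 = t2 (\<lambda>n. w (Suc (Suc (Suc n)))))"
    using dfn_subst[OF t(2)[unfolded dterm_def], where \<sigma>="\<lambda>n. if n = 0 then 1 else n + 2"] by simp
  have a3: "dfn A (\<lambda>w. w 0 = t3 (\<lambda>n. w (Suc (Suc (Suc n)))))"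
    using dfn_subst[OF t(3)[unfolded dterm_def], where \<sigma>="\<lambda>n. if n = 0 then 0 else n + 2"] by simp
  have a4: "dfn A (\<lambda>w. R (w 2) (w 1) (w 0))"
    using dfn_subst[OF R, where \<sigma>="\<lambda>n. 2 - n"] by (simp add: numeral_2_eq_2)
  have "dfn A (\<lambda>w. w 2 = t1 (\<lambda>n. w (Suc (Suc (Suc n)))) \<and> w 1 = t2 (\<lambda>n. w (Suc (Suc (Suc n))))
     \<and> w 0 = t3 (\<lambda>n. w (Suc (Suc (Suc n)))) \<and> R (w 2) (w 1) (w 0))"
    by (intro dfn_conj a1 a2 a3 a4)
  then have "dfn A (\<lambda>w. \<exists>x. \<exists>y. \<exists>z. (\<lambda>w. w 2 = t1 (\<lambda>n. w (Suc (Suc (Suc n)))) \<and> w 1 = t2 (\<lambda>n. w (Suc (Suc (Suc n))))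
     \<and> w 0 = t3 (\<lambda>n. w (Suc (Suc (Suc n)))) \<and> R (w 2) (w 1) (w 0)) (cons_env z (cons_env y (cons_env x w))))"
    by (intro dfn_ex)
  then show ?thesis
    by (rule dfn_cong) (simp add: numeral_2_eq_2 eta_contract_eq)
qed

lemma dfn_rel2:
  assumes R: "dfn A (\<lambda>w. R (w 0) (w 1))" and t: "dterm A t1" "dterm A t2"
  shows "dfn A (\<lambda>w. R (t1 w) (t2 w))"
  using dfn_rel3[where R="\<lambda>x y z. R x y", OF R t t(2)] by simp

lemma dfn_rel1:
  assumes R: "dfn A (\<lambda>w. R (w 0))" and t: "dterm A t"
  shows "dfn A (\<lambda>w. R (t w))"
  using dfn_rel3[where R="\<lambda>x y z. R x", OF R t t t] by simp

lemma dterm_fun2: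
  assumes "dfn A (\<lambda>w. w 0 = h (w 1) (w 2))" "dterm A t1" "dterm A t2"
  shows "dterm A (\<lambda>w. h (t1 w) (t2 w))"
  unfolding dterm_def
  by (rule dfn_rel3[where R="\<lambda>x y z. x = h y z", OF assms(1) dterm_var dterm_subst dterm_subst])
     (use assms in auto)

lemma dterm_fun1:
  assumes "dfn A (\<lambda>w. w 0 = h (w 1))" "dterm A t"
  shows "dterm A (\<lambda>w. h (t w))"
  unfolding dterm_def
  by (rule dfn_rel2[where R="\<lambda>x y. x = h y", OF assms(1) dterm_var dterm_subst]) (use assms in auto)

lemma dfn_lt: "dfn A (\<lambda>w. w 0 < w 1)"
  using dfn_of_rel0[OF lt_def, of A] by (simp add: numeral_2_eq_2 upt_rec)

lemma dfn_add: "dfn A (\<lambda>w. w 0 = w 1 + w 2)"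
proof -
  have "dfn A (\<lambda>w. w 2 = w 0 + w 1)"
    using dfn_of_rel0[OF add_def, of A] by (simp add: numeral_3_eq_3 numeral_2_eq_2 upt_rec)
  from dfn_subst[OF this, where \<sigma>="\<lambda>n. if n = 0 then 1 else if n = 1 then 2 else 0"]
  show ?thesis by (simp add: numeral_2_eq_2)
qed

lemma dfn_mult: "dfn A (\<lambda>w. w 0 = w 1 * w 2)"
proof -
  have "dfn A (\<lambda>w. w 2 = w 0 * w 1)"
    using dfn_of_rel0[OF mult_def, of A] by (simp add: numeral_3_eq_3 numeral_2_eq_2 upt_rec)
  from dfn_subst[OF this, where \<sigma>="\<lambda>n. if n = 0 then 1 else if n = 1 then 2 else 0"]
  show ?thesis by (simp add: numeral_2_eq_2)
qed

lemma dterm_plus: "dterm A t1 \<Longrightarrow> dterm A t2 \<Longrightarrow> dterm A (\<lambda>w. t1 w + t2 w)"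
  by (rule dterm_fun2[OF dfn_add])

lemma dterm_times: "dterm A t1 \<Longrightarrow> dterm A t2 \<Longrightarrow> dterm A (\<lambda>w. t1 w * t2 w)"
  by (rule dterm_fun2[OF dfn_mult])

lemma dfn_less_t: "dterm A t1 \<Longrightarrow> dterm A t2 \<Longrightarrow> dfn A (\<lambda>w. t1 w < t2 w)"
  by (rule dfn_rel2[OF dfn_lt])

lemma dfn_eq_t: "dterm A t1 \<Longrightarrow> dterm A t2 \<Longrightarrow> dfn A (\<lambda>w. t1 w = t2 w)"
  by (rule dfn_rel2[where R="\<lambda>x y. x = y", OF dfn_eq[of A 0 1]])

lemma dfn_disj: "dfn A P \<Longrightarrow> dfn A Q \<Longrightarrow> dfn A (\<lambda>w. P w \<or> Q w)"
  by (drule dfn_neg, drule dfn_neg, drule (1) dfn_conj, drule dfn_neg) simp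

lemma dfn_imp: "dfn A P \<Longrightarrow> dfn A Q \<Longrightarrow> dfn A (\<lambda>w. P w \<longrightarrow> Q w)"
  by (drule dfn_neg, drule (1) dfn_disj) simp

lemma dfn_iff: "dfn A P \<Longrightarrow> dfn A Q \<Longrightarrow> dfn A (\<lambda>w. P w \<longleftrightarrow> Q w)"
proof -
  assume "dfn A P" "dfn A Q"
  then have "dfn A (\<lambda>w. (P w \<longrightarrow> Q w) \<and> (Q w \<longrightarrow> P w))" by (intro dfn_conj dfn_imp)
  then show ?thesis by (rule dfn_cong) blast
qed

lemma dfn_all': "dfn A (\<lambda>w. Q (w 0) (\<lambda>n. w (Suc n))) \<Longrightarrow> dfn A (\<lambda>w. \<forall>x. Q x w)"
  by (drule dfn_neg, drule dfn_ex', drule dfn_neg) simp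

lemma dfn_le_t': "dterm A t1 \<Longrightarrow> dterm A t2 \<Longrightarrow> dfn A (\<lambda>w. t1 w \<le> t2 w)"
proof -
  assume a: "dterm A t1" "dterm A t2"
  have "dfn A (\<lambda>w. t1 w < t2 w \<or> t1 w = t2 w)" by (intro dfn_disj dfn_less_t dfn_eq_t a)
  then show ?thesis by (rule dfn_cong) (auto simp: le_less)
qed

lemma dfn_true: "dfn A (\<lambda>w. True)"
  using dfn_eq[of A 0 0] by simp

lemma dfn_false: "dfn A (\<lambda>w. False)"
  using dfn_neg[OF dfn_true] by simp

lemma dterm_zero: "dterm A (\<lambda>w. 0)"
proof -
  have "dfn A (\<lambda>w. w 0 = w 0 + w 0)" using dfn_subst[OF dfn_add, where \<sigma>="\<lambda>n. 0"] by simp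
  then show ?thesis unfolding dterm_def by (rule dfn_cong) simp
qed

lemma dterm_one: "dterm A (\<lambda>w. 1)"
proof -
  have "dfn A (\<lambda>w. w 0 = w 0 * w 0)" using dfn_subst[OF dfn_mult, where \<sigma>="\<lambda>n. 0"] by simp
  moreover have "dfn A (\<lambda>w. \<not> w 0 = 0)" using dfn_neg[OF dterm_zero[unfolded dterm_def]] .
  ultimately have "dfn A (\<lambda>w. w 0 = w 0 * w 0 \<and> \<not> w 0 = 0)" by (rule dfn_conj)
  then show ?thesis unfolding dterm_def
  proof (rule dfn_cong)
    fix w :: "nat \<Rightarrow> 'u"
    show "(w 0 = w 0 * w 0 \<and> w 0 \<noteq> 0) = (w 0 = 1)"
    proof
      assume "w 0 = w 0 * w 0 \<and> w 0 \<noteq> 0"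
      then show "w 0 = 1" by auto
    qed simp
  qed
qed

lemma dterm_uminus: "dterm A t \<Longrightarrow> dterm A (\<lambda>w. - t w)"
proof -
  assume t: "dterm A t"
  have "dfn A (\<lambda>w. w 0 + w 1 = 0)" by (intro dfn_eq_t dterm_plus dterm_var dterm_zero)
  then have "dfn A (\<lambda>w. w 0 = - w 1)" by (rule dfn_cong) (rule eq_neg_iff_add_eq_0[symmetric])
  then show ?thesis using t by (rule dterm_fun1)
qed

lemma dterm_minus: "dterm A t1 \<Longrightarrow> dterm A t2 \<Longrightarrow> dterm A (\<lambda>w. t1 w - t2 w)"
proof -
  assume "dterm A t1" "dterm A t2"
  then have "dterm A (\<lambda>w. t1 w + - t2 w)" by (intro dterm_plus dterm_uminus)
  then show ?thesis by (simp only: diff_conv_add_uminus)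
qed

lemma dterm_inverse: "dterm A t \<Longrightarrow> dterm A (\<lambda>w. inverse (t w))"
proof -
  assume t: "dterm A t"
  have "dfn A (\<lambda>w. (w 1 = 0 \<and> w 0 = 0) \<or> w 0 * w 1 = 1)"
    by (intro dfn_disj dfn_conj dfn_eq_t dterm_times dterm_var dterm_zero dterm_one)
  then have "dfn A (\<lambda>w. w 0 = inverse (w 1))"
  proof (rule dfn_cong)
    fix w :: "nat \<Rightarrow> 'u"
    show "(w 1 = 0 \<and> w 0 = 0 \<or> w 0 * w 1 = 1) = (w 0 = inverse (w 1))"
      by (metis inverse_unique left_inverse mult.commute mult_zero_left
          inverse_zero zero_neq_one)
  qed
  then show ?thesis using t by (rule dterm_fun1)
qed

lemma dterm_divide: "dterm A t1 \<Longrightarrow> dterm A t2 \<Longrightarrow> dterm A (\<lambda>w. t1 w / t2 w)"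
proof -
  assume "dterm A t1" "dterm A t2"
  then have "dterm A (\<lambda>w. t1 w * inverse (t2 w))" by (intro dterm_times dterm_inverse)
  then show ?thesis by (simp only: divide_inverse)
qed

lemma dterm_abs: "dterm A t \<Longrightarrow> dterm A (\<lambda>w. \<bar>t w\<bar>)"
proof -
  assume t: "dterm A t"
  have "dfn A (\<lambda>w. (0 \<le> w 1 \<and> w 0 = w 1) \<or> (w 1 < 0 \<and> w 0 = - w 1))"
    by (intro dfn_disj dfn_conj dfn_eq_t dfn_le_t' dfn_less_t dterm_uminus dterm_var dterm_zero)
  then have "dfn A (\<lambda>w. w 0 = \<bar>w 1\<bar>)"
    by (rule dfn_cong) auto
  then show ?thesis using t by (rule dterm_fun1)
qed

lemma dterm_two: "dterm A (\<lambda>w. 2)"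
  using dterm_plus[OF dterm_one dterm_one] by (simp add: one_add_one)

lemma dfn_mem_t: "dfn A (\<lambda>w. w 0 \<in> X) \<Longrightarrow> dterm A t \<Longrightarrow> dfn A (\<lambda>w. t w \<in> X)"
  by (rule dfn_rel1)

definition dfun :: "'u set \<Rightarrow> ('u \<Rightarrow> 'u) \<Rightarrow> bool" where
  "dfun A g \<longleftrightarrow> dfn A (\<lambda>w. w 0 = g (w 1))"

lemma dterm_app: "dfun A g \<Longrightarrow> dterm A t \<Longrightarrow> dterm A (\<lambda>w. g (t w))"
  unfolding dfun_def by (rule dterm_fun1)

lemma dterm_const_iff: "dterm A (\<lambda>w. c) \<longleftrightarrow> dfn A (\<lambda>w. w 0 = c)"
  unfolding dterm_def ..

lemmas dfn_intros = dfn_conj dfn_disj dfn_imp dfn_iff dfn_neg dfn_ex' dfn_all' dfn_less_t dfn_le_t'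
  dfn_eq_t dfn_true dfn_false
lemmas dterm_intros = dterm_var dterm_zero dterm_one dterm_two dterm_plus dterm_minus dterm_times
  dterm_uminus dterm_divide dterm_abs dterm_inverse

lemma dfun_of_definable_fun:
  assumes "definable_fun UNIV I A g" "A \<noteq> {}"
  shows "dfun A g"
proof -
  have "dfn A (\<lambda>w. w 1 = g (w 0))"
    using dfn_of_rel[OF assms(1)[unfolded definable_fun_def, THEN conjunct2] assms(2)]
    by (simp add: numeral_2_eq_2 upt_rec)
  from dfn_subst[OF this, where \<sigma>="\<lambda>n. if n = 0 then 1 else 0"]
  show ?thesis unfolding dfun_def by simp
qed

lemma dfn_sub: "dfn A P \<Longrightarrow> A \<subseteq> B \<Longrightarrow> dfn B P" by (rule dfn_mono)
lemma dterm_mono: "dterm A t \<Longrightarrow> A \<subseteq> B \<Longrightarrow> dterm B t" unfolding dterm_def by (rule dfn_mono)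
lemma dfun_mono: "dfun A t \<Longrightarrow> A \<subseteq> B \<Longrightarrow> dfun B t" unfolding dfun_def by (rule dfn_mono)

end

definition germR :: "('u::linordered_field) set \<Rightarrow> 'u \<Rightarrow> bool" where
  "germR X x \<longleftrightarrow> (\<exists>d>0. (\<forall>y. x < y \<and> y < x + d \<longrightarrow> y \<in> X) \<or> (\<forall>y. x < y \<and> y < x + d \<longrightarrow> y \<notin> X))"

definition germL :: "('u::linordered_field) set \<Rightarrow> 'u \<Rightarrow> bool" where
  "germL X x \<longleftrightarrow> (\<exists>d>0. (\<forall>y. x - d < y \<and> y < x \<longrightarrow> y \<in> X) \<or> (\<forall>y. x - d < y \<and> y < x \<longrightarrow> y \<notin> X))"

lemma germR_empty: "germR {} x"
  unfolding germR_def by (intro exI[of _ 1]) auto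

lemma germL_empty: "germL {} x"
  unfolding germL_def by (intro exI[of _ 1]) auto

lemma germR_Un: "germR J x \<Longrightarrow> germR K x \<Longrightarrow> germR (J \<union> K) x"
proof -
  assume "germR J x" "germR K x"
  then obtain d1 d2 where d: "d1 > 0" "d2 > 0"
    "(\<forall>y. x < y \<and> y < x + d1 \<longrightarrow> y \<in> J) \<or> (\<forall>y. x < y \<and> y < x + d1 \<longrightarrow> y \<notin> J)"
    "(\<forall>y. x < y \<and> y < x + d2 \<longrightarrow> y \<in> K) \<or> (\<forall>y. x < y \<and> y < x + d2 \<longrightarrow> y \<notin> K)"
    unfolding germR_def by blast
  have "min d1 d2 > 0" using d by simp
  moreover have "x + min d1 d2 \<le> x + d1" "x + min d1 d2 \<le> x + d2" by auto
  ultimately show ?thesis unfolding germR_def using d(3,4)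
    by (intro exI[of _ "min d1 d2"]) (metis (no_types, lifting) UnCI UnE order_less_le_trans)
qed

lemma germL_Un: "germL J x \<Longrightarrow> germL K x \<Longrightarrow> germL (J \<union> K) x"
proof -
  assume "germL J x" "germL K x"
  then obtain d1 d2 where d: "d1 > 0" "d2 > 0"
    "(\<forall>y. x - d1 < y \<and> y < x \<longrightarrow> y \<in> J) \<or> (\<forall>y. x - d1 < y \<and> y < x \<longrightarrow> y \<notin> J)"
    "(\<forall>y. x - d2 < y \<and> y < x \<longrightarrow> y \<in> K) \<or> (\<forall>y. x - d2 < y \<and> y < x \<longrightarrow> y \<notin> K)"
    unfolding germL_def by blast
  have "min d1 d2 > 0" using d by simp
  moreover have "x - d1 \<le> x - min d1 d2" "x - d2 \<le> x - min d1 d2" by auto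
  ultimately show ?thesis unfolding germL_def using d(3,4)
    by (intro exI[of _ "min d1 d2"]) (metis (no_types, lifting) UnCI UnE order_le_less_trans)
qed

lemma germR_basic: "basic_interval UNIV J \<Longrightarrow> germR J x"
  unfolding basic_interval_def
proof (elim disjE bexE)
  fix a assume J: "J = {a}"
  show "germR J x"
  proof (cases "x < a")
    case True then show ?thesis unfolding germR_def J by (intro exI[of _ "a - x"]) auto
  next
    case False then show ?thesis unfolding germR_def J by (intro exI[of _ 1]) auto
  qed
next
  fix a c assume J: "J = {y \<in> UNIV. a < y \<and> y < c}"
  consider "a \<le> x \<and> x < c" | "c \<le> x" | "x < a" by fastforce
  then show "germR J x"
  proof cases
    case 1 then show ?thesis unfolding germR_def J by (intro exI[of _ "c - x"]) auto
  next
    case 2 then show ?thesis unfolding germR_def J by (intro exI[of _ 1]) auto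
  next
    case 3 then show ?thesis unfolding germR_def J by (intro exI[of _ "a - x"]) auto
  qed
next
  fix a assume J: "J = {y \<in> UNIV. a < y}"
  show "germR J x"
  proof (cases "a \<le> x")
    case True then show ?thesis unfolding germR_def J by (intro exI[of _ 1]) auto
  next
    case False then show ?thesis unfolding germR_def J by (intro exI[of _ "a - x"]) auto
  qed
next
  fix c assume J: "J = {y \<in> UNIV. y < c}"
  show "germR J x"
  proof (cases "x < c")
    case True then show ?thesis unfolding germR_def J by (intro exI[of _ "c - x"]) auto
  next
    case False then show ?thesis unfolding germR_def J by (intro exI[of _ 1]) auto
  qed
next
  assume J: "J = UNIV"
  show "germR J x" unfolding germR_def J by (intro exI[of _ 1]) auto
qed

lemma germL_basic: "basic_interval UNIV J \<Longrightarrow> germL J x"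
  unfolding basic_interval_def
proof (elim disjE bexE)
  fix a assume J: "J = {a}"
  show "germL J x"
  proof (cases "a < x")
    case True then show ?thesis unfolding germL_def J by (intro exI[of _ "x - a"]) auto
  next
    case False then show ?thesis unfolding germL_def J by (intro exI[of _ 1]) auto
  qed
next
  fix a c assume J: "J = {y \<in> UNIV. a < y \<and> y < c}"
  consider "a < x \<and> x \<le> c" | "x \<le> a" | "c < x" by fastforce
  then show "germL J x"
  proof cases
    case 1 then show ?thesis unfolding germL_def J by (intro exI[of _ "x - a"]) auto
  next
    case 2 then show ?thesis unfolding germL_def J by (intro exI[of _ 1]) auto
  next
    case 3 then show ?thesis unfolding germL_def J by (intro exI[of _ "x - c"]) auto
  qed
next
  fix a assume J: "J = {y \<in> UNIV. a < y}"
  show "germL J x"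
  proof (cases "a < x")
    case True then show ?thesis unfolding germL_def J by (intro exI[of _ "x - a"]) auto
  next
    case False then show ?thesis unfolding germL_def J by (intro exI[of _ 1]) auto
  qed
next
  fix c assume J: "J = {y \<in> UNIV. y < c}"
  show "germL J x"
  proof (cases "x \<le> c")
    case True then show ?thesis unfolding germL_def J by (intro exI[of _ 1]) auto
  next
    case False then show ?thesis unfolding germL_def J by (intro exI[of _ "x - c"]) auto
  qed
next
  assume J: "J = UNIV"
  show "germL J x" unfolding germL_def J by (intro exI[of _ 1]) auto
qed

lemma germR_Union: "finite F \<Longrightarrow> (\<forall>J\<in>F. basic_interval UNIV J) \<Longrightarrow> germR (\<Union>F) x"
proof (induction F rule: finite_induct)
  case empty then show ?case using germR_empty by simp
next
  case (insert J F)
  then have "basic_interval UNIV J" "germR (\<Union>F) x" by auto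
  then show ?case using germR_Un[OF germR_basic] by simp
qed

lemma germL_Union: "finite F \<Longrightarrow> (\<forall>J\<in>F. basic_interval UNIV J) \<Longrightarrow> germL (\<Union>F) x"
proof (induction F rule: finite_induct)
  case empty then show ?case using germL_empty by simp
next
  case (insert J F)
  then have "basic_interval UNIV J" "germL (\<Union>F) x" by auto
  then show ?case using germL_Un[OF germL_basic] by simp
qed

lemma basic_infinite: "basic_interval UNIV (J::('u::linordered_field) set) \<Longrightarrow> infinite J \<Longrightarrow> \<exists>p q. p < q \<and> {p<..<q} \<subseteq> J"
  unfolding basic_interval_def
proof (elim disjE bexE)
  fix a c assume J: "J = {y \<in> UNIV. a < y \<and> y < c}" "infinite J"
  then have "a < c" by (metis (no_types, lifting) empty_Collect_eq finite.emptyI order.strict_trans)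
  then show ?thesis using J by (intro exI[of _ a] exI[of _ c]) auto
next
  fix a assume J: "J = {y \<in> UNIV. a < y}"
  show ?thesis using J by (intro exI[of _ a] exI[of _ "a + 1"]) auto
next
  fix c assume J: "J = {y \<in> UNIV. y < c}"
  show ?thesis using J by (intro exI[of _ "c - 1"] exI[of _ c]) auto
next
  assume J: "J = UNIV"
  show ?thesis using J by (intro exI[of _ 0] exI[of _ 1]) auto
qed auto

definition islub :: "('u::linordered_field) set \<Rightarrow> 'u \<Rightarrow> bool" where
  "islub X s \<longleftrightarrow> (\<forall>x\<in>X. x \<le> s) \<and> (\<forall>u. (\<forall>x\<in>X. x \<le> u) \<longrightarrow> s \<le> u)"

lemma islub_Un: "islub J s \<Longrightarrow> islub K t \<Longrightarrow> islub (J \<union> K) (max s t)"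
  unfolding islub_def by (auto simp: max_def)

lemma basic_lub: "basic_interval UNIV (J::('u::linordered_field) set) \<Longrightarrow> J \<noteq> {} \<Longrightarrow> (\<forall>x\<in>J. x \<le> M) \<Longrightarrow> \<exists>s. islub J s"
  unfolding basic_interval_def
proof (elim disjE bexE)
  fix a assume J: "J = {a}"
  show ?thesis unfolding islub_def J by (intro exI[of _ a]) auto
next
  fix a c assume J: "J = {y \<in> UNIV. a < y \<and> y < c}" "J \<noteq> {}"
  then have ac: "a < c" by auto
  have "c \<le> u" if u: "\<forall>x\<in>J. x \<le> u" for u
  proof (rule ccontr)
    assume "\<not> c \<le> u"
    then have "u < c" by simp
    define y where "y = (max a u + c) / 2"
    have "max a u < c" using ac \<open>u < c\<close> by simp
    then have "max a u < y" "y < c" unfolding y_def by (simp_all add: field_simps)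
    then have "y \<in> J" "u < y" using J by auto
    with u show False by auto
  qed
  then show ?thesis unfolding islub_def J by (intro exI[of _ c]) auto
next
  fix a assume J: "J = {y \<in> UNIV. a < y}" "\<forall>x\<in>J. x \<le> M"
  have "max a M + 1 \<in> J" using J by auto
  with J have False by (metis add_le_same_cancel1 le_max_iff_disj not_one_le_zero order.trans)
  then show ?thesis ..
next
  fix c assume J: "J = {y \<in> UNIV. y < c}"
  have "c \<le> u" if u: "\<forall>x\<in>J. x \<le> u" for u
  proof (rule ccontr)
    assume "\<not> c \<le> u"
    then have "u < c" by simp
    define y where "y = (u + c) / 2"
    have "u < y" "y < c" using \<open>u < c\<close> unfolding y_def by (simp_all add: field_simps)
    then show False using u J by auto
  qed
  then show ?thesis unfolding islub_def J by (intro exI[of _ c]) auto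
next
  assume J: "J = UNIV" "\<forall>x\<in>J. x \<le> M"
  then have "M + 1 \<le> M" by auto
  then show ?thesis by simp
qed

lemma Union_lub: "finite F \<Longrightarrow> (\<forall>J\<in>F. basic_interval UNIV J) \<Longrightarrow> \<Union>F \<noteq> {} \<Longrightarrow> (\<forall>x\<in>\<Union>F. x \<le> M)
   \<Longrightarrow> \<exists>s. islub (\<Union>F) s"
proof (induction F rule: finite_induct)
  case empty then show ?case by simp
next
  case (insert J F)
  show ?case
  proof (cases "J = {}")
    case True
    then show ?thesis using insert by simp
  next
    case False
    then obtain s where s: "islub J s" using basic_lub[of J M] insert.prems by auto
    show ?thesis
    proof (cases "\<Union>F = {}")
      case True then have "J \<union> \<Union>F = J" by (simp only: True Un_empty_right)
      then show ?thesis using s by auto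
    next
      case False
      then obtain t where "islub (\<Union>F) t" using insert by auto
      then show ?thesis using islub_Un[OF s] by auto
    qed
  qed
qed

context omin begin

definition dset :: "'u set \<Rightarrow> 'u set \<Rightarrow> bool" where
  "dset A X \<longleftrightarrow> dfn A (\<lambda>w. w 0 \<in> X)"

lemma dset_mono: "dset A X \<Longrightarrow> A \<subseteq> B \<Longrightarrow> dset B X"
  unfolding dset_def by (rule dfn_mono)

lemma decomp:
  assumes "dset A X"
  shows "\<exists>F. finite F \<and> X = \<Union>F \<and> (\<forall>J\<in>F. basic_interval UNIV J)"
proof -
  have "dfn UNIV (\<lambda>w. w 0 \<in> X)" using assms dfn_mono unfolding dset_def by blast
  then have "definable_rel UNIV I UNIV 1 (\<lambda>xs. xs ! 0 \<in> X)" by (rule rel_of_dfn1)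
  then have "definable_set UNIV I UNIV X" unfolding definable_set_def by simp
  then show ?thesis using omin_U unfolding o_minimal_def by blast
qed

lemma germR: "dset A X \<Longrightarrow> germR X x"
proof -
  assume "dset A X"
  then obtain F where "finite F" "X = \<Union>F" "\<forall>J\<in>F. basic_interval UNIV J" using decomp by blast
  then show ?thesis using germR_Union by simp
qed

lemma germL: "dset A X \<Longrightarrow> germL X x"
proof -
  assume "dset A X"
  then obtain F where "finite F" "X = \<Union>F" "\<forall>J\<in>F. basic_interval UNIV J" using decomp by blast
  then show ?thesis using germL_Union by simp
qed

lemma dset_infinite: "dset A X \<Longrightarrow> infinite X \<Longrightarrow> \<exists>p q. p < q \<and> {p<..<q} \<subseteq> X"
proof -
  assume "dset A X" "infinite X"
  then obtain F where F: "finite F" "X = \<Union>F" "\<forall>J\<in>F. basic_interval UNIV J" using decomp by blast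
  have "\<exists>J\<in>F. infinite J"
  proof (rule ccontr)
    assume "\<not> (\<exists>J\<in>F. infinite J)"
    then have "finite (\<Union>F)" using F(1) by (intro finite_Union) auto
    then show False using F(2) \<open>infinite X\<close> by simp
  qed
  then obtain J where J: "J \<in> F" "infinite J" by blast
  then obtain p q where "p < q" "{p<..<q} \<subseteq> J" using basic_infinite[of J] F(3) by blast
  moreover have "J \<subseteq> X" using J F(2) by blast
  ultimately show ?thesis by blast
qed

lemma dset_lub: "dset A X \<Longrightarrow> X \<noteq> {} \<Longrightarrow> (\<forall>x\<in>X. x \<le> M) \<Longrightarrow> \<exists>s. islub X s"
proof -
  assume "dset A X" "X \<noteq> {}" "\<forall>x\<in>X. x \<le> M"
  moreover obtain F where "finite F" "X = \<Union>F" "\<forall>J\<in>F. basic_interval UNIV J" using decomp \<open>dset A X\<close> by blast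
  ultimately show ?thesis using Union_lub[of F M] by simp
qed

end

definition isglb :: "('u::linordered_field) set \<Rightarrow> 'u \<Rightarrow> bool" where
  "isglb X s \<longleftrightarrow> (\<forall>x\<in>X. s \<le> x) \<and> (\<forall>u. (\<forall>x\<in>X. u \<le> x) \<longrightarrow> u \<le> s)"

definition Bd :: "('u::linordered_field) set \<Rightarrow> 'u set" where
  "Bd X = {x. \<forall>d>0. (\<exists>y. \<bar>y - x\<bar> < d \<and> y \<in> X) \<and> (\<exists>z. \<bar>z - x\<bar> < d \<and> z \<notin> X)}"

lemma mid_in: "(p::'u::linordered_field) < q \<Longrightarrow> \<bar>y - (p + q) / 2\<bar> < (q - p) / 2 \<Longrightarrow> y \<in> {p<..<q}"
  by (auto simp: abs_less_iff field_simps)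

lemma mid_pos: "(p::'u::linordered_field) < q \<Longrightarrow> 0 < (q - p) / 2"
  by simp

lemma mid_self: "\<bar>(p + q) / 2 - (p + q) / 2\<bar> = (0::'u::linordered_field)"
  by simp

context omin begin

lemma uminus_mem_image: "(x \<in> uminus ` X) = (- x \<in> (X::'u set))"
  by (metis image_iff minus_minus)

lemma dset_uminus: "dset A X \<Longrightarrow> dset A (uminus ` X)"
  unfolding dset_def
proof -
  assume X: "dfn A (\<lambda>w. w 0 \<in> X)"
  have "dfn A (\<lambda>w. - w 0 \<in> X)" by (intro dfn_mem_t[OF X] dterm_intros)
  then show "dfn A (\<lambda>w. w 0 \<in> uminus ` X)" by (rule dfn_cong) (simp only: uminus_mem_image)
qed

lemma dset_glb: "dset A X \<Longrightarrow> X \<noteq> {} \<Longrightarrow> (\<forall>x\<in>X. M \<le> x) \<Longrightarrow> \<exists>s. isglb X s"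
proof -
  assume X: "dset A X" "X \<noteq> {}" "\<forall>x\<in>X. M \<le> x"
  have "\<forall>y\<in>uminus ` X. y \<le> - M" using X(3) by auto
  then obtain s where s: "islub (uminus ` X) s" using dset_lub[OF dset_uminus[OF X(1)]] X(2) by blast
  have "isglb X (- s)"
    unfolding isglb_def
  proof (intro conjI allI impI ballI)
    fix x assume "x \<in> X"
    then show "- s \<le> x" using s unfolding islub_def by force
  next
    fix u assume "\<forall>x\<in>X. u \<le> x"
    then have "\<forall>y\<in>uminus ` X. y \<le> - u" by auto
    then have "s \<le> - u" using s unfolding islub_def by blast
    then show "u \<le> - s" by (simp add: le_minus_iff)
  qed
  then show ?thesis by blast
qed

lemma dset_finite_noint: "dset A X \<Longrightarrow> (\<And>p q. p < q \<Longrightarrow> \<not> {p<..<q} \<subseteq> X) \<Longrightarrow> finite X"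
  using dset_infinite by blast

lemma dset_Int: "dset A X \<Longrightarrow> dset A Y \<Longrightarrow> dset A (X \<inter> Y)"
  unfolding dset_def by (drule (1) dfn_conj) simp

lemma dset_Diff: "dset A X \<Longrightarrow> dset A Y \<Longrightarrow> dset A (X - Y)"
  unfolding dset_def by (drule dfn_neg[of A "\<lambda>w. w 0 \<in> Y"], drule (1) dfn_conj) simp

lemma dset_Ioo: "p \<in> A \<Longrightarrow> q \<in> A \<Longrightarrow> dset A {p<..<q}"
  unfolding dset_def
proof -
  assume "p \<in> A" "q \<in> A"
  then have "dfn A (\<lambda>w. p < w 0 \<and> w 0 < q)" by (intro dfn_intros dterm_intros dterm_param)
  then show "dfn A (\<lambda>w. w 0 \<in> {p<..<q})" by (rule dfn_cong) simp
qed

lemma dset_Bd: "dset A X \<Longrightarrow> dset A (Bd X)"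
  unfolding dset_def
proof -
  assume X: "dfn A (\<lambda>w. w 0 \<in> X)"
  have "dfn A (\<lambda>w. \<forall>d. 0 < d \<longrightarrow> (\<exists>y. \<bar>y - w 0\<bar> < d \<and> y \<in> X) \<and> (\<exists>z. \<bar>z - w 0\<bar> < d \<and> \<not> z \<in> X))"
    by (intro dfn_intros dterm_intros dfn_mem_t[OF X])
  then show "dfn A (\<lambda>w. w 0 \<in> Bd X)" by (rule dfn_cong) (simp add: Bd_def)
qed

lemma finite_Bd: assumes X: "dset A X" shows "finite (Bd X)"
proof (rule dset_finite_noint[OF dset_Bd[OF X]])
  fix p q :: 'u assume pq: "p < q"
  show "\<not> {p<..<q} \<subseteq> Bd X"
  proof
    assume sub: "{p<..<q} \<subseteq> Bd X"
    have XU: "dset UNIV X" using X dset_mono by blast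
    have dpq: "dset UNIV {p<..<q}" by (rule dset_Ioo) auto
    have "\<exists>p' q'. p' < q' \<and> {p'<..<q'} \<subseteq> {p<..<q} \<and> ({p'<..<q'} \<subseteq> X \<or> {p'<..<q'} \<subseteq> - X)"
    proof (cases "finite (X \<inter> {p<..<q})")
      case True
      have "infinite ({p<..<q} - (X \<inter> {p<..<q}))"
        using Diff_infinite_finite[OF True] pq by simp
      moreover have "dset UNIV ({p<..<q} - (X \<inter> {p<..<q}))"
        by (intro dset_Diff dset_Int dpq XU)
      ultimately obtain p' q' where "p' < q'" "{p'<..<q'} \<subseteq> {p<..<q} - (X \<inter> {p<..<q})"
        using dset_infinite by blast
      then show ?thesis by blast
    next
      case False
      then obtain p' q' where "p' < q'" "{p'<..<q'} \<subseteq> X \<inter> {p<..<q}"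
        using dset_infinite[OF dset_Int[OF XU dpq]] by blast
      then show ?thesis by blast
    qed
    then obtain p' q' where pq': "p' < q'" "{p'<..<q'} \<subseteq> X \<or> {p'<..<q'} \<subseteq> - X"
      and pqs: "{p'<..<q'} \<subseteq> {p<..<q}" by blast
    define m where "m = (p' + q') / 2"
    define d where "d = (q' - p') / 2"
    have "d > 0" using pq' unfolding d_def by simp
    have near: "\<bar>y - m\<bar> < d \<Longrightarrow> y \<in> {p'<..<q'}" for y using mid_in[OF pq'(1)] unfolding m_def d_def .
    have "m \<in> {p'<..<q'}" using near[of m] \<open>d > 0\<close> by simp
    have "m \<in> Bd X" using \<open>m \<in> {p'<..<q'}\<close> pqs sub by blast
    then obtain y z where "\<bar>y - m\<bar> < d" "y \<in> X" "\<bar>z - m\<bar> < d" "z \<notin> X"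
      using \<open>d > 0\<close> unfolding Bd_def by blast
    then show False using near pq'(2) by blast
  qed
qed

end

lemma islub_unique: "islub X s \<Longrightarrow> islub X t \<Longrightarrow> s = t"
  unfolding islub_def by (meson order.antisym)

lemma isglb_unique: "isglb X s \<Longrightarrow> isglb X t \<Longrightarrow> s = t"
  unfolding isglb_def by (meson order.antisym)

context omin begin

lemma uniform:
  assumes P: "dfn UNIV (\<lambda>w. P (w 0) (w 1))"
    and mono: "\<And>x e e'. P x e \<Longrightarrow> 0 < e' \<Longrightarrow> e' \<le> e \<Longrightarrow> P x e'"
    and pq: "p < q" and all: "\<And>x. p < x \<Longrightarrow> x < q \<Longrightarrow> \<exists>e>0. P x e"
  shows "\<exists>p' q' e. p' < q' \<and> {p'<..<q'} \<subseteq> {p<..<q} \<and> 0 < e \<and> (\<forall>x\<in>{p'<..<q'}. P x e)"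
proof -
  define S where "S x = {e. 0 < e \<and> e \<le> 1 \<and> P x e}" for x
  have Sne: "\<exists>e. e \<in> S x \<and> 0 < e" if x: "p < x" "x < q" for x
  proof -
    obtain e where "e > 0" "P x e" using all x by blast
    then have "min e 1 \<in> S x" unfolding S_def using mono[of x e "min e 1"] by auto
    then show ?thesis unfolding S_def by blast
  qed
  have dS: "dfn UNIV (\<lambda>w. islub (S (w 0)) (w 1))"
  proof -
    have "dfn UNIV (\<lambda>w. (\<forall>y. (0 < y \<and> y \<le> 1 \<and> P (w 0) y) \<longrightarrow> y \<le> w 1)
        \<and> (\<forall>u. (\<forall>y. (0 < y \<and> y \<le> 1 \<and> P (w 0) y) \<longrightarrow> y \<le> u) \<longrightarrow> w 1 \<le> u))"
      by (intro dfn_intros dterm_intros dfn_rel2[OF P])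
    then show ?thesis by (rule dfn_cong) (simp add: islub_def S_def)
  qed
  have lub_ex: "\<exists>d. islub (S x) d" if x: "p < x" "x < q" for x
  proof -
    have dSx: "dset UNIV (S x)" unfolding dset_def
    proof -
      have "dfn UNIV (\<lambda>w. 0 < w 0 \<and> w 0 \<le> 1 \<and> P x (w 0))"
        by (intro dfn_intros dterm_intros dfn_rel2[OF P] dterm_param) simp
      then show "dfn UNIV (\<lambda>w. w 0 \<in> S x)" by (rule dfn_cong) (simp add: S_def)
    qed
    have "S x \<noteq> {}" using Sne[OF x] by blast
    moreover have "\<forall>y\<in>S x. y \<le> 1" by (simp add: S_def)
    ultimately show ?thesis using dset_lub[OF dSx] by blast
  qed
  have lub_pos: "0 < d" if h: "p < x" "x < q" "islub (S x) d" for x d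
  proof -
    obtain e where "e \<in> S x" "0 < e" using Sne h by blast
    then show ?thesis using h(3) unfolding islub_def by (meson order_less_le_trans)
  qed
  have lub_P: "P x e" if h: "islub (S x) d" "0 < e" "e < d" for x d e
  proof -
    have "\<not> (\<forall>y\<in>S x. y \<le> e)"
    proof
      assume "\<forall>y\<in>S x. y \<le> e"
      then have "d \<le> e" using h(1) unfolding islub_def by blast
      then show False using h(3) by simp
    qed
    then obtain y where "y \<in> S x" "e < y" by (meson not_le)
    then show ?thesis using mono[of x y e] h(2) unfolding S_def by simp
  qed
  define Y where "Y = {d. \<exists>x. p < x \<and> x < q \<and> islub (S x) d}"
  have dY: "dset UNIV Y" unfolding dset_def
  proof -
    have "dfn UNIV (\<lambda>w. \<exists>x. p < x \<and> x < q \<and> islub (S x) (w 0))"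
    proof (rule dfn_ex', intro dfn_conj)
      show "dfn UNIV (\<lambda>w. islub (S (w 0)) (w (Suc 0)))" using dS by simp
    qed (intro dfn_intros dterm_intros dterm_param; simp)+
    then show "dfn UNIV (\<lambda>w. w 0 \<in> Y)" by (rule dfn_cong) (simp add: Y_def)
  qed
  define F where "F d = {x. p < x \<and> x < q \<and> islub (S x) d}" for d
  have dF: "dset UNIV (F d)" for d unfolding dset_def
  proof -
    have "dfn UNIV (\<lambda>w. p < w 0 \<and> w 0 < q \<and> islub (S (w 0)) d)"
    proof (intro dfn_conj)
      show "dfn UNIV (\<lambda>w. islub (S (w 0)) d)"
        using dfn_rel2[OF dS dterm_var dterm_param[of d]] by simp
    qed (intro dfn_intros dterm_intros dterm_param; simp)+
    then show "dfn UNIV (\<lambda>w. w 0 \<in> F d)" by (rule dfn_cong) (simp add: F_def)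
  qed
  show ?thesis
  proof (cases "finite Y")
    case True
    have "{p<..<q} \<subseteq> (\<Union>d\<in>Y. F d)"
    proof
      fix x assume "x \<in> {p<..<q}"
      then obtain d where "islub (S x) d" using lub_ex by auto
      then show "x \<in> (\<Union>d\<in>Y. F d)" using \<open>x \<in> {p<..<q}\<close> unfolding Y_def F_def by auto
    qed
    moreover have "infinite {p<..<q}" using pq by simp
    ultimately have "infinite (\<Union>d\<in>Y. F d)" using finite_subset by blast
    then obtain d where "d \<in> Y" "infinite (F d)" using True by blast
    then obtain p' q' where pq': "p' < q'" "{p'<..<q'} \<subseteq> F d" using dset_infinite[OF dF] by blast
    have "0 < d" using \<open>d \<in> Y\<close> lub_pos unfolding Y_def by blast
    have "\<forall>x\<in>{p'<..<q'}. P x (d / 2)"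
    proof
      fix x assume "x \<in> {p'<..<q'}"
      then have "islub (S x) d" using pq' unfolding F_def by blast
      then show "P x (d / 2)" using lub_P[of x d "d / 2"] \<open>0 < d\<close> by simp
    qed
    moreover have "{p'<..<q'} \<subseteq> {p<..<q}" using pq' unfolding F_def by auto
    ultimately show ?thesis using pq' \<open>0 < d\<close> by (intro exI[of _ p'] exI[of _ q'] exI[of _ "d / 2"]) simp
  next
    case False
    then obtain y1 y2 where y: "y1 < y2" "{y1<..<y2} \<subseteq> Y" using dset_infinite[OF dY] by blast
    define e where "e = (y1 + y2) / 2"
    have e: "y1 < e" "e < y2" using y(1) unfolding e_def by (simp_all add: field_simps)
    then have "e \<in> Y" using y by auto
    then have "0 < e" using lub_pos unfolding Y_def by blast
    define Z where "Z = {x. p < x \<and> x < q \<and> (\<exists>d. islub (S x) d \<and> e < d)}"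
    have dZ: "dset UNIV Z" unfolding dset_def
    proof -
      have "dfn UNIV (\<lambda>w. p < w 0 \<and> w 0 < q \<and> (\<exists>d. islub (S (w 0)) d \<and> e < d))"
      proof (intro dfn_conj dfn_ex')
        show "dfn UNIV (\<lambda>w. islub (S (w (Suc 0))) (w 0))"
          using dfn_subst[OF dS, where \<sigma>="\<lambda>n. if n = 0 then 1 else 0"] by simp
      qed (intro dfn_intros dterm_intros dterm_param; simp)+
      then show "dfn UNIV (\<lambda>w. w 0 \<in> Z)" by (rule dfn_cong) (simp add: Z_def)
    qed
    define g where "g x = (THE d. islub (S x) d)" for x
    have "{e<..<y2} \<subseteq> g ` Z"
    proof
      fix d assume d: "d \<in> {e<..<y2}"
      then have "d \<in> Y" using y e by auto
      then obtain x where x: "p < x" "x < q" "islub (S x) d" unfolding Y_def by blast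
      then have "g x = d" unfolding g_def using islub_unique by blast
      moreover have "x \<in> Z" using x d unfolding Z_def by auto
      ultimately show "d \<in> g ` Z" by blast
    qed
    moreover have "infinite {e<..<y2}" using e by simp
    ultimately have "infinite Z" using finite_surj by blast
    then obtain p' q' where pq': "p' < q'" "{p'<..<q'} \<subseteq> Z" using dset_infinite[OF dZ] by blast
    have "\<forall>x\<in>{p'<..<q'}. P x e"
    proof
      fix x assume "x \<in> {p'<..<q'}"
      then obtain d where "islub (S x) d" "e < d" using pq' unfolding Z_def by blast
      then show "P x e" using lub_P \<open>0 < e\<close> by blast
    qed
    moreover have "{p'<..<q'} \<subseteq> {p<..<q}" using pq' unfolding Z_def by auto
    ultimately show ?thesis using pq' \<open>0 < e\<close> by blast
  qed
qed

end

definition cont :: "(('u::linordered_field) \<Rightarrow> 'u) \<Rightarrow> 'u \<Rightarrow> bool" where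
  "cont g x \<longleftrightarrow> (\<forall>e>0. \<exists>d>0. \<forall>y. \<bar>y - x\<bar> < d \<longrightarrow> \<bar>g y - g x\<bar> < e)"

lemma cont_ge:
  fixes G :: "'u::linordered_field \<Rightarrow> 'u"
  assumes "x < t" "cont G t" "\<forall>u. x \<le> u \<and> u < t \<longrightarrow> c \<le> G u"
  shows "c \<le> G t"
proof (rule ccontr)
  assume "\<not> c \<le> G t"
  then have "0 < c - G t" by simp
  then obtain d where d: "d > 0" "\<forall>y. \<bar>y - t\<bar> < d \<longrightarrow> \<bar>G y - G t\<bar> < c - G t"
    using assms(2) unfolding cont_def by blast
  define u where "u = max x (t - d / 2)"
  have "x \<le> u" "u < t" "\<bar>u - t\<bar> < d" using assms(1) d(1) unfolding u_def by (auto simp: abs_if)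
  then have "c \<le> G u" "\<bar>G u - G t\<bar> < c - G t" using assms(3) d(2) by auto
  then show False by (simp add: abs_less_iff)
qed

lemma cont_affine:
  fixes f :: "'u::linordered_field \<Rightarrow> 'u"
  assumes "cont f t"
  shows "cont (\<lambda>u. f u - M * u) t"
  unfolding cont_def
proof (intro allI impI)
  fix e :: 'u assume "e > 0"
  then obtain d where d: "d > 0" "\<forall>y. \<bar>y - t\<bar> < d \<longrightarrow> \<bar>f y - f t\<bar> < e / 2"
    using assms unfolding cont_def by (meson half_gt_zero)
  define d' where "d' = min d (e / (2 * (\<bar>M\<bar> + 1)))"
  have "d' > 0" using d(1) \<open>e > 0\<close> unfolding d'_def by (simp add: add_pos_nonneg)
  moreover have "\<bar>(f y - M * y) - (f t - M * t)\<bar> < e" if y: "\<bar>y - t\<bar> < d'" for y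
  proof -
    have "\<bar>f y - f t\<bar> < e / 2" using y d(2) unfolding d'_def by auto
    moreover have "\<bar>M * (y - t)\<bar> \<le> (\<bar>M\<bar> + 1) * \<bar>y - t\<bar>" by (simp add: abs_mult mult_right_mono)
    moreover have "(\<bar>M\<bar> + 1) * \<bar>y - t\<bar> < (\<bar>M\<bar> + 1) * (e / (2 * (\<bar>M\<bar> + 1)))"
      using y unfolding d'_def by (intro mult_strict_left_mono) (auto simp: add_pos_nonneg)
    moreover have "(\<bar>M\<bar> + 1) * (e / (2 * (\<bar>M\<bar> + 1))) = e / 2"
      by (simp add: add_pos_nonneg field_simps)
    ultimately have "\<bar>f y - f t\<bar> + \<bar>M * (y - t)\<bar> < e" by linarith
    moreover have "(f y - M * y) - (f t - M * t) = (f y - f t) - M * (y - t)"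
      by (simp add: algebra_simps)
    then have "\<bar>(f y - M * y) - (f t - M * t)\<bar> \<le> \<bar>f y - f t\<bar> + \<bar>M * (y - t)\<bar>"
      using abs_triangle_ineq4 by metis
    ultimately show ?thesis by linarith
  qed
  ultimately show "\<exists>d>0. \<forall>y. \<bar>y - t\<bar> < d \<longrightarrow> \<bar>(f y - M * y) - (f t - M * t)\<bar> < e" by blast
qed

context omin begin

lemma real_induct:
  assumes Q: "dfn UNIV (\<lambda>w. Q (w 0))" and xy: "x < y" and Qx: "Q x"
    and step: "\<And>t. x \<le> t \<Longrightarrow> t < y \<Longrightarrow> (\<forall>u. x \<le> u \<and> u \<le> t \<longrightarrow> Q u) \<Longrightarrow>
                 \<exists>d>0. \<forall>u. t < u \<and> u < t + d \<longrightarrow> Q u"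
    and close: "\<And>t. x < t \<Longrightarrow> t \<le> y \<Longrightarrow> (\<forall>u. x \<le> u \<and> u < t \<longrightarrow> Q u) \<Longrightarrow> Q t"
  shows "Q y"
proof -
  define S where "S = {t. x \<le> t \<and> t \<le> y \<and> (\<forall>u. x \<le> u \<and> u \<le> t \<longrightarrow> Q u)}"
  have dS: "dset UNIV S" unfolding dset_def
  proof -
    have "dfn UNIV (\<lambda>w. x \<le> w 0 \<and> w 0 \<le> y \<and> (\<forall>u. x \<le> u \<and> u \<le> w 0 \<longrightarrow> Q u))"
      by (intro dfn_intros dterm_intros dterm_param dfn_rel1[OF Q]; simp)
    then show "dfn UNIV (\<lambda>w. w 0 \<in> S)" by (rule dfn_cong) (simp add: S_def)
  qed
  have "x \<in> S" using Qx xy unfolding S_def by auto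
  then obtain s where s: "islub S s" using dset_lub[OF dS, of y] unfolding S_def by blast
  have xs: "x \<le> s" using s \<open>x \<in> S\<close> unfolding islub_def by blast
  have sy: "s \<le> y" using s unfolding islub_def S_def by blast
  have before: "Q u" if "x \<le> u" "u < s" for u
  proof -
    have "\<not> (\<forall>t\<in>S. t \<le> u)"
    proof
      assume "\<forall>t\<in>S. t \<le> u"
      then have "s \<le> u" using s unfolding islub_def by blast
      then show False using that by simp
    qed
    then obtain t where "t \<in> S" "u < t" by (meson not_le)
    then show ?thesis using that unfolding S_def by auto
  qed
  have Qs: "Q s"
  proof (cases "s = x")
    case True then show ?thesis using Qx by simp
  next
    case False then have "x < s" using xs by simp
    then show ?thesis using close sy before by blast
  qed
  have sS: "s \<in> S"
    unfolding S_def using xs sy before Qs by (auto simp: order_le_less)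
  have "s = y"
  proof (rule ccontr)
    assume "s \<noteq> y"
    then have "s < y" using sy by simp
    then obtain d where d: "d > 0" "\<forall>u. s < u \<and> u < s + d \<longrightarrow> Q u"
      using step[of s] xs sS unfolding S_def by blast
    define s' where "s' = min (s + d / 2) y"
    have "s < s'" using d(1) \<open>s < y\<close> unfolding s'_def by simp
    have "s' \<in> S" unfolding S_def
    proof (intro CollectI conjI allI impI)
      show "x \<le> s'" using xs \<open>s < s'\<close> by simp
      show "s' \<le> y" unfolding s'_def by simp
    next
      fix u assume u: "x \<le> u \<and> u \<le> s'"
      show "Q u"
      proof (cases "u \<le> s")
        case True then show ?thesis using sS u unfolding S_def by blast
      next
        case False
        moreover have "u < s + d" using u d(1) unfolding s'_def by (simp add: min_le_iff_disj) 
        ultimately show ?thesis using d(2) by simp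
      qed
    qed
    then have "s' \<le> s" using s unfolding islub_def by blast
    then show False using \<open>s < s'\<close> by simp
  qed
  then show ?thesis using Qs by simp
qed

lemma slope_mono:
  assumes G: "dfun UNIV G" and xy: "x < y"
    and c: "\<And>t. x < t \<Longrightarrow> t \<le> y \<Longrightarrow> cont G t"
    and r: "\<And>t. x \<le> t \<Longrightarrow> t < y \<Longrightarrow> \<exists>d>0. \<forall>h. 0 < h \<and> h < d \<longrightarrow> G t \<le> G (t + h)"
  shows "G x \<le> G y"
proof (rule real_induct[where Q="\<lambda>t. G x \<le> G t", OF _ xy])
  show "dfn UNIV (\<lambda>w. G x \<le> G (w 0))"
    by (intro dfn_intros dterm_intros dterm_app[OF G] dterm_param; simp)
next
  fix t assume t: "x \<le> t" "t < y" "\<forall>u. x \<le> u \<and> u \<le> t \<longrightarrow> G x \<le> G u"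
  then obtain d where d: "d > 0" "\<forall>h. 0 < h \<and> h < d \<longrightarrow> G t \<le> G (t + h)" using r by blast
  have "G x \<le> G u" if "t < u" "u < t + d" for u
    using d(2)[rule_format, of "u - t"] that t(1,3) by fastforce
  then show "\<exists>d>0. \<forall>u. t < u \<and> u < t + d \<longrightarrow> G x \<le> G u" using d(1) by blast
next
  fix t assume t: "x < t" "t \<le> y" "\<forall>u. x \<le> u \<and> u < t \<longrightarrow> G x \<le> G u"
  show "G x \<le> G t" by (rule cont_ge[OF t(1) c[OF t(1,2)] t(3)])
qed simp

end

definition limR :: "(('u::linordered_field) \<Rightarrow> 'u) \<Rightarrow> 'u \<Rightarrow> bool" where
  "limR q L \<longleftrightarrow> (\<forall>e>0. \<exists>d>0. \<forall>h. 0 < h \<and> h < d \<longrightarrow> \<bar>q h - L\<bar> < e)"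

lemma limR_unique: "limR q L1 \<Longrightarrow> limR q L2 \<Longrightarrow> L1 = (L2::'u::linordered_field)"
proof (rule ccontr)
  assume l: "limR q L1" "limR q L2" "L1 \<noteq> L2"
  define e where "e = \<bar>L1 - L2\<bar> / 2"
  have "e > 0" using l(3) unfolding e_def by simp
  obtain d1 where d1: "d1 > 0" "\<forall>h. 0 < h \<and> h < d1 \<longrightarrow> \<bar>q h - L1\<bar> < e"
    using l(1) \<open>e > 0\<close> unfolding limR_def by blast
  obtain d2 where d2: "d2 > 0" "\<forall>h. 0 < h \<and> h < d2 \<longrightarrow> \<bar>q h - L2\<bar> < e"
    using l(2) \<open>e > 0\<close> unfolding limR_def by blast
  note d = d1 d2
  define h where "h = min d1 d2 / 2"
  have "0 < h" "h < d1" "h < d2" using d unfolding h_def by auto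
  then have "\<bar>q h - L1\<bar> < e" "\<bar>q h - L2\<bar> < e" using d by auto
  then have "\<bar>L1 - L2\<bar> < 2 * e" by (simp add: abs_less_iff)
  then show False unfolding e_def by simp
qed

context omin begin

lemma lim_right:
  assumes q: "dfun UNIV q"
  shows "(\<forall>M. \<exists>d>0. \<forall>h. 0 < h \<and> h < d \<longrightarrow> M < q h) \<or> (\<forall>M. \<exists>d>0. \<forall>h. 0 < h \<and> h < d \<longrightarrow> q h < M)
     \<or> (\<exists>L. limR q L)"
proof -
  define evgt where "evgt c \<longleftrightarrow> (\<exists>d>0. \<forall>h. 0 < h \<and> h < d \<longrightarrow> c < q h)" for c
  define evlt where "evlt c \<longleftrightarrow> (\<exists>d>0. \<forall>h. 0 < h \<and> h < d \<longrightarrow> q h < c)" for c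
  have g1: "germR {h. c < q h} 0" for c
  proof (rule germR)
    show "dset UNIV {h. c < q h}" unfolding dset_def
    proof (rule dfn_cong[of _ "\<lambda>w. c < q (w 0)"])
      show "dfn UNIV (\<lambda>w. c < q (w 0))" by (intro dfn_intros dterm_intros dterm_app[OF q] dterm_param; simp)
    qed simp
  qed
  have g2: "germR {h. q h < c} 0" for c
  proof (rule germR)
    show "dset UNIV {h. q h < c}" unfolding dset_def
    proof (rule dfn_cong[of _ "\<lambda>w. q (w 0) < c"])
      show "dfn UNIV (\<lambda>w. q (w 0) < c)" by (intro dfn_intros dterm_intros dterm_app[OF q] dterm_param; simp)
    qed simp
  qed
  show ?thesis
  proof (cases "\<exists>c. \<not> evgt c \<and> \<not> evlt c")
    case True
    then obtain c where c: "\<not> evgt c" "\<not> evlt c" by blast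
    obtain d1 where d1: "d1 > 0" "\<forall>h. 0 < h \<and> h < d1 \<longrightarrow> \<not> c < q h"
      using g1[of c] c(1) unfolding germR_def evgt_def by auto
    obtain d2 where d2: "d2 > 0" "\<forall>h. 0 < h \<and> h < d2 \<longrightarrow> \<not> q h < c"
      using g2[of c] c(2) unfolding germR_def evlt_def by auto
    have "limR q c" unfolding limR_def
    proof (intro allI impI)
      fix e :: 'u assume "e > 0"
      have "\<forall>h. 0 < h \<and> h < min d1 d2 \<longrightarrow> \<bar>q h - c\<bar> < e"
        using d1 d2 \<open>e > 0\<close> by (auto simp: not_less)
      moreover have "min d1 d2 > 0" using d1(1) d2(1) by simp
      ultimately show "\<exists>d>0. \<forall>h. 0 < h \<and> h < d \<longrightarrow> \<bar>q h - c\<bar> < e" by blast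
    qed
    then show ?thesis by blast
  next
    case False
    then have all: "evgt c \<or> evlt c" for c by blast
    show ?thesis
    proof (cases "\<forall>c. evgt c")
      case True then show ?thesis unfolding evgt_def by blast
    next
      case False
      then obtain c0 where "\<not> evgt c0" by blast
      then have c0: "evlt c0" using all by blast
      show ?thesis
      proof (cases "\<forall>c. evlt c")
        case True then show ?thesis unfolding evlt_def by blast
      next
        case False
        then obtain c1 where "\<not> evlt c1" by blast
        then have c1: "evgt c1" using all by blast
        have bound: "c < c0" if hc: "evgt c" for c
        proof -
          obtain d d' where "d > 0" "\<forall>h. 0 < h \<and> h < d \<longrightarrow> c < q h"
            "d' > 0" "\<forall>h. 0 < h \<and> h < d' \<longrightarrow> q h < c0"
            using hc c0 unfolding evgt_def evlt_def by blast
          moreover have "0 < min d d' / 2" "min d d' / 2 < d" "min d d' / 2 < d'"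
            using \<open>d > 0\<close> \<open>d' > 0\<close> by auto
          ultimately have "c < q (min d d' / 2)" "q (min d d' / 2) < c0" by blast+
          then show ?thesis by simp
        qed
        have dU: "dset UNIV {c. evgt c}" unfolding dset_def
        proof (rule dfn_cong[of _ "\<lambda>w. \<exists>d. 0 < d \<and> (\<forall>h. 0 < h \<and> h < d \<longrightarrow> w 0 < q h)"])
          show "dfn UNIV (\<lambda>w. \<exists>d. 0 < d \<and> (\<forall>h. 0 < h \<and> h < d \<longrightarrow> w 0 < q h))"
            by (intro dfn_intros dterm_intros dterm_app[OF q])
        qed (simp add: evgt_def)
        obtain s where s: "islub {c. evgt c} s"
          using dset_lub[OF dU, of c0] c1 bound by fastforce
        have "limR q s" unfolding limR_def
        proof (intro allI impI)
          fix e :: 'u assume "e > 0"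
          have "\<not> evgt (s + e)"
          proof
            assume "evgt (s + e)"
            then have "s + e \<le> s" using s unfolding islub_def by blast
            then show False using \<open>e > 0\<close> by simp
          qed
          then have "evlt (s + e)" using all by blast
          then obtain d1 where d1: "d1 > 0" "\<forall>h. 0 < h \<and> h < d1 \<longrightarrow> q h < s + e"
            unfolding evlt_def by blast
          have "\<not> (\<forall>c\<in>{c. evgt c}. c \<le> s - e)"
          proof
            assume "\<forall>c\<in>{c. evgt c}. c \<le> s - e"
            then have "s \<le> s - e" using s unfolding islub_def by blast
            then show False using \<open>e > 0\<close> by simp
          qed
          then obtain c where "evgt c" "s - e < c" by auto
          then obtain d2 where d2: "d2 > 0" "\<forall>h. 0 < h \<and> h < d2 \<longrightarrow> c < q h"
            unfolding evgt_def by blast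
          have "\<forall>h. 0 < h \<and> h < min d1 d2 \<longrightarrow> \<bar>q h - s\<bar> < e"
          proof (intro allI impI)
            fix h assume "0 < h \<and> h < min d1 d2"
            then have "q h < s + e" "c < q h" using d1 d2 by auto
            then show "\<bar>q h - s\<bar> < e" using \<open>s - e < c\<close> by (simp add: abs_less_iff)
          qed
          then show "\<exists>d>0. \<forall>h. 0 < h \<and> h < d \<longrightarrow> \<bar>q h - s\<bar> < e" using d1(1) d2(1)
            by (intro exI[of _ "min d1 d2"]) simp
        qed
        then show ?thesis by blast
      qed
    qed
  qed
qed

end

context omin begin

lemma dfun_iff: "dfun A h \<longleftrightarrow> dterm A (\<lambda>w. h (w 0))"
  unfolding dfun_def dterm_def by simp

lemma dfun_comp_term: "dterm A (\<lambda>w. t (w 0)) \<Longrightarrow> dfun A t"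
  using dfun_iff by blast

end

locale omE = omin I for I :: "'r \<Rightarrow> ('u::linordered_field) list \<Rightarrow> bool" +
  fixes E :: "'u set"
  assumes elem: "elementary_sub I E"
begin

lemma E_ne: "E \<noteq> {}" using elem unfolding elementary_sub_def by blast

lemma transfer_ex:
  assumes X: "dset E X" and ne: "x0 \<in> X"
  shows "\<exists>x\<in>E. x \<in> X"
proof -
  obtain \<phi> :: "'r fm" and ps where h: "set ps \<subseteq> E" "\<forall>w. (w 0 \<in> X) = sat UNIV I \<phi> (list_env ps w)"
    using X unfolding dset_def dfn_def by blast
  obtain e0 where "e0 \<in> E" using E_ne by blast
  define l where "l = length ps"
  define \<tau> where "\<tau> = (\<lambda>n. if n < l then Suc n else (0::nat))"
  define v where "v = list_env ps (\<lambda>_. e0)"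
  have vE: "range v \<subseteq> E" using h(1) \<open>e0 \<in> E\<close> by (auto simp: v_def list_env_def)
  have key: "(cons_env x v \<circ> \<tau>) = list_env ps (\<lambda>_. x)" for x
    by (rule ext) (simp add: \<tau>_def v_def list_env_def l_def)
  have mem: "(x \<in> X) = sat UNIV I (ren \<tau> \<phi>) (cons_env x v)" for x
    using h(2)[rule_format, of "\<lambda>_. x"] by (simp add: sat_ren key)
  have "sat UNIV I (Ex (ren \<tau> \<phi>)) v" using mem[of x0] ne by auto
  then have "sat E I (Ex (ren \<tau> \<phi>)) v" using elem vE unfolding elementary_sub_def by blast
  then obtain x where x: "x \<in> E" "sat E I (ren \<tau> \<phi>) (cons_env x v)" by auto
  have "range (cons_env x v) \<subseteq> E"
  proof
    fix z assume "z \<in> range (cons_env x v)"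
    then obtain n where "z = cons_env x v n" by blast
    then show "z \<in> E" using vE x(1) by (cases n) auto
  qed
  then have "sat UNIV I (ren \<tau> \<phi>) (cons_env x v)" using x(2) elem unfolding elementary_sub_def by blast
  then show ?thesis using mem x(1) by blast
qed

lemma fin_E_aux: "\<forall>X. finite X \<and> card X = n \<and> dset E X \<longrightarrow> X \<subseteq> E"
proof (induction n)
  case 0 then show ?case by auto
next
  case (Suc n)
  show ?case
  proof (intro allI impI)
    fix X assume X: "finite X \<and> card X = Suc n \<and> dset E X"
    then have "X \<noteq> {}" by auto
    define m where "m = Max X"
    have mX: "m \<in> X" using X \<open>X \<noteq> {}\<close> unfolding m_def by simp
    define Xm where "Xm = {x \<in> X. \<forall>y\<in>X. y \<le> x}"
    have Xm: "Xm = {m}"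
    proof
      show "Xm \<subseteq> {m}"
      proof
        fix x assume "x \<in> Xm"
        then have "x \<in> X" "m \<le> x" using mX unfolding Xm_def by auto
        moreover have "x \<le> m" using \<open>x \<in> X\<close> X unfolding m_def by simp
        ultimately show "x \<in> {m}" by simp
      qed
      show "{m} \<subseteq> Xm" using mX X unfolding Xm_def m_def by simp
    qed
    have dX: "dfn E (\<lambda>w. w 0 \<in> X)" using X unfolding dset_def by blast
    have dXm: "dset E Xm" unfolding dset_def
    proof -
      have "dfn E (\<lambda>w. w 0 \<in> X \<and> (\<forall>y. y \<in> X \<longrightarrow> y \<le> w 0))"
        by (intro dfn_intros dterm_intros dfn_mem_t[OF dX])
      then show "dfn E (\<lambda>w. w 0 \<in> Xm)" by (rule dfn_cong) (auto simp: Xm_def)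
    qed
    obtain x where "x \<in> E" "x \<in> Xm" using transfer_ex[OF dXm] Xm by blast
    then have "m \<in> E" using Xm by simp
    have "X - Xm \<subseteq> E"
    proof -
      have "finite (X - Xm) \<and> card (X - Xm) = n \<and> dset E (X - Xm)"
        using X Xm mX dset_Diff[OF _ dXm] by (simp add: card_Diff_singleton)
      then show ?thesis using Suc.IH by blast
    qed
    then show "X \<subseteq> E" using \<open>m \<in> E\<close> Xm by blast
  qed
qed

lemma fin_E: "dset E X \<Longrightarrow> finite X \<Longrightarrow> X \<subseteq> E"
  using fin_E_aux by blast

lemma const_E: "dterm E (\<lambda>w. c) \<Longrightarrow> c \<in> E"
proof -
  assume "dterm E (\<lambda>w. c)"
  then have "dset E {c}" unfolding dset_def dterm_def by (rule dfn_cong) simp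
  then show ?thesis using fin_E by blast
qed

lemma NB:
  assumes X: "dset E X" and b: "b \<notin> E" "b \<in> X"
  shows "\<exists>d>0. \<forall>y. \<bar>y - b\<bar> < d \<longrightarrow> y \<in> X"
proof -
  have "Bd X \<subseteq> E" using fin_E[OF dset_Bd[OF X] finite_Bd[OF X]] .
  then have "b \<notin> Bd X" using b by blast
  then obtain d where d: "d > 0" "\<not> ((\<exists>y. \<bar>y - b\<bar> < d \<and> y \<in> X) \<and> (\<exists>z. \<bar>z - b\<bar> < d \<and> z \<notin> X))"
    unfolding Bd_def by blast
  have "\<exists>y. \<bar>y - b\<bar> < d \<and> y \<in> X" using d(1) b(2) by (intro exI[of _ b]) simp
  then show ?thesis using d by blast
qed

lemma EL:
  assumes X: "dset E X" and b: "b \<notin> E" "b \<in> X"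
  shows "(\<forall>y. b \<le> y \<longrightarrow> y \<in> X) \<or> (\<exists>c\<in>E. b < c \<and> (\<forall>y. b \<le> y \<and> y < c \<longrightarrow> y \<in> X))"
proof (cases "\<forall>y. b \<le> y \<longrightarrow> y \<in> X")
  case True then show ?thesis by blast
next
  case False
  define S where "S = {y. b \<le> y \<and> y \<notin> X}"
  have dX: "dfn UNIV (\<lambda>w. w 0 \<in> X)" using X dfn_mono unfolding dset_def by blast
  have dS: "dset UNIV S" unfolding dset_def
  proof -
    have "dfn UNIV (\<lambda>w. b \<le> w 0 \<and> \<not> w 0 \<in> X)"
      by (intro dfn_intros dterm_intros dfn_mem_t[OF dX] dterm_param; simp)
    then show "dfn UNIV (\<lambda>w. w 0 \<in> S)" by (rule dfn_cong) (simp add: S_def)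
  qed
  have "S \<noteq> {}" using False unfolding S_def by blast
  then obtain c where c: "isglb S c" using dset_glb[OF dS, of b] unfolding S_def by blast
  have bc: "b \<le> c" using c unfolding isglb_def S_def by blast
  have below: "y \<in> X" if "b \<le> y" "y < c" for y
  proof (rule ccontr)
    assume "y \<notin> X"
    then have "y \<in> S" using that unfolding S_def by simp
    then have "c \<le> y" using c unfolding isglb_def by blast
    then show False using that by simp
  qed
  have "c \<in> Bd X" unfolding Bd_def
  proof (intro CollectI allI impI conjI)
    fix d :: 'u assume "d > 0"
    show "\<exists>y. \<bar>y - c\<bar> < d \<and> y \<in> X"
    proof (cases "c = b")
      case True then show ?thesis using b(2) \<open>d > 0\<close> by (intro exI[of _ b]) simp
    next
      case False
      then have "b < c" using bc by simp
      define y where "y = max b (c - d / 2)"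
      have "b \<le> y" "y < c" "\<bar>y - c\<bar> < d" using \<open>b < c\<close> \<open>d > 0\<close> unfolding y_def by (auto simp: abs_if)
      then show ?thesis using below by blast
    qed
    have "\<not> (\<forall>z\<in>S. c + d \<le> z)"
    proof
      assume "\<forall>z\<in>S. c + d \<le> z"
      then have "c + d \<le> c" using c unfolding isglb_def by blast
      then show False using \<open>d > 0\<close> by simp
    qed
    then obtain z where z: "z \<in> S" "z < c + d" by (meson not_le)
    then have "c \<le> z" using c unfolding isglb_def by blast
    then have "\<bar>z - c\<bar> < d" using z(2) by simp
    then show "\<exists>z. \<bar>z - c\<bar> < d \<and> z \<notin> X" using z(1) unfolding S_def by blast
  qed
  moreover have "Bd X \<subseteq> E" using fin_E[OF dset_Bd[OF X] finite_Bd[OF X]] .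
  ultimately have "c \<in> E" by blast
  then have "b < c" using bc b(1) by (cases "b = c") auto
  then show ?thesis using \<open>c \<in> E\<close> below by blast
qed

end

context omE begin

lemma uminus_E: "c \<in> E \<Longrightarrow> - c \<in> E"
  by (rule const_E) (intro dterm_intros dterm_param)

lemma noJU:
  assumes g: "dfun E g" and b: "b \<notin> E"
  shows "\<not> (\<exists>e>0. \<exists>d>0. \<forall>y. b < y \<and> y < b + d \<longrightarrow> g b + e < g y)"
proof
  assume bJ: "\<exists>e>0. \<exists>d>0. \<forall>y. b < y \<and> y < b + d \<longrightarrow> g b + e < g y"
  define JU where "JU = {x. \<exists>e>0. \<exists>d>0. \<forall>y. x < y \<and> y < x + d \<longrightarrow> g x + e < g y}"
  have dJ: "dset E JU" unfolding dset_def
  proof -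
    have "dfn E (\<lambda>w. \<exists>e. 0 < e \<and> (\<exists>d. 0 < d \<and> (\<forall>y. w 0 < y \<and> y < w 0 + d \<longrightarrow> g (w 0) + e < g y)))"
      by (intro dfn_intros dterm_intros dterm_app[OF g])
    then show "dfn E (\<lambda>w. w 0 \<in> JU)" by (rule dfn_cong) (simp add: JU_def)
  qed
  have gU: "dfun UNIV g" using g dfun_mono by blast
  obtain d where d: "d > 0" "\<forall>y. \<bar>y - b\<bar> < d \<longrightarrow> y \<in> JU" using NB[OF dJ b] bJ unfolding JU_def by blast
  define P where "P x e \<longleftrightarrow> (\<forall>y. x < y \<and> y < x + e \<longrightarrow> g x + e < g y)" for x e
  have dP: "dfn UNIV (\<lambda>w. P (w 0) (w 1))"
  proof -
    have "dfn UNIV (\<lambda>w. \<forall>y. w 0 < y \<and> y < w 0 + w 1 \<longrightarrow> g (w 0) + w 1 < g y)"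
      by (intro dfn_intros dterm_intros dterm_app[OF gU])
    then show ?thesis by (rule dfn_cong) (simp add: P_def)
  qed
  have mono: "P x e'" if h: "P x e" "0 < e'" "e' \<le> e" for x e e'
    unfolding P_def
  proof (intro allI impI)
    fix y assume "x < y \<and> y < x + e'"
    then have "g x + e < g y" using h(1,3) unfolding P_def by auto
    then show "g x + e' < g y" using h(3) by simp
  qed
  have all: "\<exists>e>0. P x e" if x: "b - d < x" "x < b + d" for x
  proof -
    have "x \<in> JU" using d(2) x by (simp add: abs_less_iff)
    then obtain e d' where ed: "e > 0" "d' > 0" "\<forall>y. x < y \<and> y < x + d' \<longrightarrow> g x + e < g y"
      unfolding JU_def by blast
    have "P x (min e d')" unfolding P_def
    proof (intro allI impI)
      fix y assume "x < y \<and> y < x + min e d'"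
      then have "g x + e < g y" using ed(3) by auto
      then show "g x + min e d' < g y" by (meson add_le_cancel_left min.cobounded1 order_le_less_trans)
    qed
    then show ?thesis using ed by (intro exI[of _ "min e d'"]) simp
  qed
  have "b - d < b + d" using d(1) by simp
  have U0: "\<exists>p' q' e. p' < q' \<and> {p'<..<q'} \<subseteq> {b - d<..<b + d} \<and> 0 < e \<and> (\<forall>x\<in>{p'<..<q'}. P x e)"
  proof (rule uniform[OF dP])
    show "\<And>x e e'. P x e \<Longrightarrow> 0 < e' \<Longrightarrow> e' \<le> e \<Longrightarrow> P x e'" by (rule mono)
    show "\<And>x. b - d < x \<Longrightarrow> x < b + d \<Longrightarrow> \<exists>e>0. P x e" by (rule all)
  qed fact
  then obtain p' q' e where U: "p' < q'" "0 < e" "\<forall>x\<in>{p'<..<q'}. P x e" by blast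
  define q2 where "q2 = min q' (p' + e)"
  have pq2: "p' < q2" using U unfolding q2_def by simp
  have inc: "g x + e < g z" if xz: "p' < x" "x < z" "z < q2" for x z
  proof -
    have "x \<in> {p'<..<q'}" using xz unfolding q2_def by auto
    moreover have "z < x + e" using xz unfolding q2_def by auto
    ultimately show ?thesis using U(3) xz(2) unfolding P_def by blast
  qed
  define V where "V = g ` {p'<..<q2}"
  have "inj_on g {p'<..<q2}"
  proof (rule inj_onI)
    fix x z assume "x \<in> {p'<..<q2}" "z \<in> {p'<..<q2}" "g x = g z"
    then show "x = z" using inc[of x z] inc[of z x] U(2) by (cases x z rule: linorder_cases) auto
  qed
  moreover have "infinite {p'<..<q2}" using pq2 by simp
  ultimately have "infinite V" unfolding V_def using finite_imageD by blast
  moreover have "dset UNIV V" unfolding dset_def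
  proof -
    have "dfn UNIV (\<lambda>w. \<exists>x. p' < x \<and> x < q2 \<and> w 0 = g x)"
      by (intro dfn_intros dterm_intros dterm_app[OF gU] dterm_param; simp)
    then show "dfn UNIV (\<lambda>w. w 0 \<in> V)" by (rule dfn_cong) (auto simp: V_def)
  qed
  ultimately obtain k1 k2 where k: "k1 < k2" "{k1<..<k2} \<subseteq> V" using dset_infinite by blast
  define r where "r = min ((k2 - k1) / 3) (e / 2)"
  have r: "0 < r" "r \<le> (k2 - k1) / 3" "r \<le> e / 2"
    using k(1) U(2) unfolding r_def by (simp, simp only: min.cobounded1, simp only: min.cobounded2)
  have "k1 + r \<in> V" "k1 + 2 * r \<in> V" using k r by auto
  then obtain x1 x2 where x: "x1 \<in> {p'<..<q2}" "x2 \<in> {p'<..<q2}" "g x1 = k1 + r" "g x2 = k1 + 2 * r"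
    unfolding V_def by (metis imageE)
  show False
  proof (cases x1 x2 rule: linorder_cases)
    case less then have "g x1 + e < g x2" using inc[of x1 x2] x by auto
    then show False using x r by simp
  next
    case equal then show False using x r by simp
  next
    case greater then have "g x2 + e < g x1" using inc[of x2 x1] x by auto
    then show False using x r by simp
  qed
qed

lemma gen_rcont:
  assumes g: "dfun E g" and b: "b \<notin> E" and e: "e > 0"
  shows "\<exists>d>0. \<forall>y. b < y \<and> y < b + d \<longrightarrow> \<bar>g y - g b\<bar> < e"
proof -
  have gU: "dfun UNIV g" using g dfun_mono by blast
  have ng: "dfun E (\<lambda>x. - g x)" unfolding dfun_iff by (intro dterm_intros dterm_app[OF g])
  have g1: "germR {y. g b + e / 2 < g y} b"
  proof (rule germR)
    show "dset UNIV {y. g b + e / 2 < g y}" unfolding dset_def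
    proof (rule dfn_cong[of _ "\<lambda>w. g b + e / 2 < g (w 0)"])
      show "dfn UNIV (\<lambda>w. g b + e / 2 < g (w 0))"
        by (intro dfn_intros dterm_intros dterm_app[OF gU] dterm_param; simp)
    qed simp
  qed
  have g2: "germR {y. g y < g b - e / 2} b"
  proof (rule germR)
    show "dset UNIV {y. g y < g b - e / 2}" unfolding dset_def
    proof (rule dfn_cong[of _ "\<lambda>w. g (w 0) < g b - e / 2"])
      show "dfn UNIV (\<lambda>w. g (w 0) < g b - e / 2)"
        by (intro dfn_intros dterm_intros dterm_app[OF gU] dterm_param; simp)
    qed simp
  qed
  obtain d1 where d1: "d1 > 0" "\<forall>y. b < y \<and> y < b + d1 \<longrightarrow> \<not> g b + e / 2 < g y"
  proof -
    obtain d where d: "d > 0" "(\<forall>y. b < y \<and> y < b + d \<longrightarrow> y \<in> {y. g b + e / 2 < g y}) \<or>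
      (\<forall>y. b < y \<and> y < b + d \<longrightarrow> y \<notin> {y. g b + e / 2 < g y})" using g1 unfolding germR_def by blast
    have "\<not> (\<forall>y. b < y \<and> y < b + d \<longrightarrow> g b + e / 2 < g y)"
      using noJU[OF g b] d(1) e by (metis half_gt_zero)
    then have "\<forall>y. b < y \<and> y < b + d \<longrightarrow> \<not> g b + e / 2 < g y" using d by auto
    then show ?thesis using d(1) by (rule_tac that) auto
  qed
  obtain d2 where d2: "d2 > 0" "\<forall>y. b < y \<and> y < b + d2 \<longrightarrow> \<not> g y < g b - e / 2"
  proof -
    obtain d where d: "d > 0" "(\<forall>y. b < y \<and> y < b + d \<longrightarrow> y \<in> {y. g y < g b - e / 2}) \<or>
      (\<forall>y. b < y \<and> y < b + d \<longrightarrow> y \<notin> {y. g y < g b - e / 2})" using g2 unfolding germR_def by blast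
    have "\<not> (\<forall>y. b < y \<and> y < b + d \<longrightarrow> (- g b) + e / 2 < - g y)"
      using noJU[OF ng b] d(1) e by (metis half_gt_zero)
    then have "\<not> (\<forall>y. b < y \<and> y < b + d \<longrightarrow> g y < g b - e / 2)" by (simp add: algebra_simps)
    then have "\<forall>y. b < y \<and> y < b + d \<longrightarrow> \<not> g y < g b - e / 2" using d by auto
    then show ?thesis using d(1) by (rule_tac that) auto
  qed
  have "\<forall>y. b < y \<and> y < b + min d1 d2 \<longrightarrow> \<bar>g y - g b\<bar> < e"
  proof (intro allI impI)
    fix y assume "b < y \<and> y < b + min d1 d2"
    then have "\<not> g b + e / 2 < g y" "\<not> g y < g b - e / 2" using d1 d2 by auto
    then show "\<bar>g y - g b\<bar> < e" using e by (simp add: abs_less_iff)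
  qed
  moreover have "min d1 d2 > 0" using d1 d2 by simp
  ultimately show ?thesis by blast
qed

lemma gen_cont:
  assumes g: "dfun E g" and b: "b \<notin> E"
  shows "cont g b"
  unfolding cont_def
proof (intro allI impI)
  fix e :: 'u assume e: "e > 0"
  have h: "dfun E (\<lambda>x. g (- x))" unfolding dfun_iff by (intro dterm_intros dterm_app[OF g])
  have mb: "- b \<notin> E" using uminus_E b by fastforce
  obtain d1 where d1: "d1 > 0" "\<forall>y. b < y \<and> y < b + d1 \<longrightarrow> \<bar>g y - g b\<bar> < e"
    using gen_rcont[OF g b e] by blast
  obtain d2 where d2: "d2 > 0" "\<forall>y. - b < y \<and> y < - b + d2 \<longrightarrow> \<bar>g (- y) - g (- (- b))\<bar> < e"
    using gen_rcont[OF h mb e] by blast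
  have "\<bar>g y - g b\<bar> < e" if y: "\<bar>y - b\<bar> < min d1 d2" for y
  proof (cases y b rule: linorder_cases)
    case less
    then have "- b < - y" "- y < - b + d2" using y by (auto simp: abs_less_iff)
    then show ?thesis using d2(2)[rule_format, of "- y"] by simp
  next
    case equal then show ?thesis using e by simp
  next
    case greater
    then show ?thesis using d1(2) y by (auto simp: abs_less_iff)
  qed
  moreover have "min d1 d2 > 0" using d1 d2 by simp
  ultimately show "\<exists>d>0. \<forall>y. \<bar>y - b\<bar> < d \<longrightarrow> \<bar>g y - g b\<bar> < e" by blast
qed

end

definition RD :: "(('u::linordered_field) \<Rightarrow> 'u) \<Rightarrow> 'u \<Rightarrow> 'u \<Rightarrow> bool" where
  "RD g x L \<longleftrightarrow> limR (\<lambda>h. (g (x + h) - g x) / h) L"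

definition RDinf :: "(('u::linordered_field) \<Rightarrow> 'u) \<Rightarrow> 'u \<Rightarrow> bool" where
  "RDinf g x \<longleftrightarrow> (\<forall>M. \<exists>d>0. \<forall>h. 0 < h \<and> h < d \<longrightarrow> M < (g (x + h) - g x) / h)"

definition D :: "(('u::linordered_field) \<Rightarrow> 'u) \<Rightarrow> 'u \<Rightarrow> 'u" where
  "D g x = (if \<exists>L. RD g x L then THE L. RD g x L else 0)"

lemma RD_D: "RD g x L \<Longrightarrow> D g x = L"
  unfolding D_def RD_def using limR_unique by (metis (no_types, lifting) the_equality)

lemma RD_uminus: "RD g x L \<Longrightarrow> RD (\<lambda>y. - g y) x (- L)"
  unfolding RD_def limR_def
proof (intro allI impI)
  fix e :: 'a assume "\<forall>e>0. \<exists>d>0. \<forall>h. 0 < h \<and> h < d \<longrightarrow> \<bar>(g (x + h) - g x) / h - L\<bar> < e" "e > 0"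
  then obtain d where d: "d > 0" "\<forall>h. 0 < h \<and> h < d \<longrightarrow> \<bar>(g (x + h) - g x) / h - L\<bar> < e" by blast
  have "\<bar>(- g (x + h) - - g x) / h - - L\<bar> = \<bar>(g (x + h) - g x) / h - L\<bar>" for h
  proof -
    have e1: "- g (x + h) - - g x = - (g (x + h) - g x)" by simp
    have "(- g (x + h) - - g x) / h = - ((g (x + h) - g x) / h)" by (simp only: e1 minus_divide_left)
    then have "(- g (x + h) - - g x) / h - - L = - ((g (x + h) - g x) / h - L)" by simp
    then show ?thesis by (simp only: abs_minus_cancel)
  qed
  then show "\<exists>d>0. \<forall>h. 0 < h \<and> h < d \<longrightarrow> \<bar>(- g (x + h) - - g x) / h - - L\<bar> < e" using d by auto
qed

lemma cont_neg: "cont g (- y) \<Longrightarrow> cont (\<lambda>x. g (- x)) y"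
  unfolding cont_def
proof (intro allI impI)
  fix e :: 'a assume "\<forall>e>0. \<exists>d>0. \<forall>z. \<bar>z - - y\<bar> < d \<longrightarrow> \<bar>g z - g (- y)\<bar> < e" "e > 0"
  then obtain d where d: "d > 0" "\<forall>z. \<bar>z - - y\<bar> < d \<longrightarrow> \<bar>g z - g (- y)\<bar> < e" by blast
  have "\<bar>g (- z) - g (- y)\<bar> < e" if "\<bar>z - y\<bar> < d" for z
  proof -
    have "\<bar>- z - - y\<bar> = \<bar>z - y\<bar>" by (metis abs_minus_commute minus_diff_eq minus_minus diff_minus_eq_add
          add.commute)
    then show ?thesis using d(2) that by auto
  qed
  then show "\<exists>d>0. \<forall>z. \<bar>z - y\<bar> < d \<longrightarrow> \<bar>g (- z) - g (- y)\<bar> < e" using d(1) by blast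
qed

context omin begin

lemma dfn_cont: "dfun A g \<Longrightarrow> dset A {x. cont g x}"
  unfolding dset_def
proof -
  assume g: "dfun A g"
  have "dfn A (\<lambda>w. \<forall>e. 0 < e \<longrightarrow> (\<exists>d. 0 < d \<and> (\<forall>y. \<bar>y - w 0\<bar> < d \<longrightarrow> \<bar>g y - g (w 0)\<bar> < e)))"
    by (intro dfn_intros dterm_intros dterm_app[OF g])
  then show "dfn A (\<lambda>w. w 0 \<in> {x. cont g x})" by (rule dfn_cong) (simp add: cont_def)
qed

lemma dfn_RD: "dfun A g \<Longrightarrow> dfn A (\<lambda>w. RD g (w 0) (w 1))"
proof -
  assume g: "dfun A g"
  have "dfn A (\<lambda>w. \<forall>e. 0 < e \<longrightarrow> (\<exists>d. 0 < d \<and> (\<forall>h. 0 < h \<and> h < d \<longrightarrow>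
      \<bar>(g (w 0 + h) - g (w 0)) / h - w 1\<bar> < e)))"
    by (intro dfn_intros dterm_intros dterm_app[OF g])
  then show ?thesis by (rule dfn_cong) (simp add: RD_def limR_def)
qed

lemma dfn_RDinf: "dfun A g \<Longrightarrow> dset A {x. RDinf g x}"
  unfolding dset_def
proof -
  assume g: "dfun A g"
  have "dfn A (\<lambda>w. \<forall>M. \<exists>d. 0 < d \<and> (\<forall>h. 0 < h \<and> h < d \<longrightarrow> M < (g (w 0 + h) - g (w 0)) / h))"
    by (intro dfn_intros dterm_intros dterm_app[OF g])
  then show "dfn A (\<lambda>w. w 0 \<in> {x. RDinf g x})" by (rule dfn_cong) (simp add: RDinf_def)
qed

lemma dfun_D: assumes g: "dfun A g" shows "dfun A (D g)"
  unfolding dfun_def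
proof -
  have R: "dfn A (\<lambda>w. RD g (w 0) (w 1))" by (rule dfn_RD[OF g])
  have R1: "dfn A (\<lambda>w. RD g (w 1) (w 0))"
    using dfn_subst[OF R, where \<sigma>="\<lambda>n. if n = 0 then 1 else 0"] by simp
  have R2: "dfn A (\<lambda>w. \<exists>L. RD g (w 1) L)"
  proof (rule dfn_ex')
    have "dfn A (\<lambda>w. RD g (w 2) (w 0))"
      using dfn_subst[OF R, where \<sigma>="\<lambda>n. if n = 0 then 2 else 0"] by simp
    then show "dfn A (\<lambda>w. RD g (w (Suc 1)) (w 0))" by (simp add: numeral_2_eq_2)
  qed
  have "dfn A (\<lambda>w. w 0 = 0)" by (intro dfn_eq_t dterm_var dterm_zero)
  then have "dfn A (\<lambda>w. \<not> (\<exists>L. RD g (w 1) L) \<and> w 0 = 0)" by (rule dfn_conj[OF dfn_neg[OF R2]])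
  then have "dfn A (\<lambda>w. RD g (w 1) (w 0) \<or> (\<not> (\<exists>L. RD g (w 1) L) \<and> w 0 = 0))"
    by (rule dfn_disj[OF R1])
  moreover have key: "(RD g (w 1) (w 0) \<or> (\<not> (\<exists>L. RD g (w 1) L) \<and> w 0 = 0)) = (w 0 = D g (w 1))" for w :: "nat \<Rightarrow> 'u"
    proof (cases "\<exists>L. RD g (w 1) L")
      case True
      then obtain L where L: "RD g (w 1) L" by blast
      then have "D g (w 1) = L" by (rule RD_D)
      moreover have "RD g (w 1) (w 0) \<longleftrightarrow> w 0 = L"
        using L RD_D[of g "w 1" "w 0"] RD_D[of g "w 1" L] by auto
      ultimately show ?thesis using True by auto
    next
      case False
      then show ?thesis by (auto simp: D_def)
    qed
  ultimately show "dfn A (\<lambda>w. w 0 = D g (w 1))" by (rule dfn_cong)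
qed

lemma dfun_uminus: assumes g: "dfun A g" shows "dfun A (\<lambda>x. - g x)"
  unfolding dfun_iff by (intro dterm_intros dterm_app[OF g])

lemma dfun_neg: assumes g: "dfun A g" shows "dfun A (\<lambda>x. g (- x))"
  unfolding dfun_iff by (intro dterm_intros dterm_app[OF g])

lemma dfun_affine: assumes g: "dfun A g" and c: "c \<in> A" shows "dfun A (\<lambda>x. g x - c * x)"
  unfolding dfun_iff by (intro dterm_intros dterm_app[OF g] dterm_param c)

end

lemma RDinf_uminus: "(\<forall>M. \<exists>d>0. \<forall>h. 0 < h \<and> h < d \<longrightarrow> (g (x + h) - g x) / h < M) \<Longrightarrow>
   RDinf (\<lambda>y. - g y) x"
  unfolding RDinf_def
proof (intro allI)
  fix M :: 'a assume a: "\<forall>M. \<exists>d>0. \<forall>h. 0 < h \<and> h < d \<longrightarrow> (g (x + h) - g x) / h < M"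
  then obtain d where d: "d > 0" "\<forall>h. 0 < h \<and> h < d \<longrightarrow> (g (x + h) - g x) / h < - M" by blast
  have "M < (- g (x + h) - - g x) / h" if "0 < h" "h < d" for h
  proof -
    have e1: "- g (x + h) - - g x = - (g (x + h) - g x)" by simp
    have "(- g (x + h) - - g x) / h = - ((g (x + h) - g x) / h)" by (simp only: e1 minus_divide_left)
    moreover have "(g (x + h) - g x) / h < - M" using d(2) that by blast
    ultimately show ?thesis by (simp only:)
  qed
  then show "\<exists>d>0. \<forall>h. 0 < h \<and> h < d \<longrightarrow> M < (- g (x + h) - - g x) / h" using d(1) by blast
qed

context omE begin

lemma no_RDinf:
  assumes g: "dfun E g" and x0: "x0 \<notin> E"
  shows "\<not> RDinf g x0"
proof
  assume R: "RDinf g x0"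
  define S where "S = {x. RDinf g x} \<inter> {x. cont g x}"
  have dS: "dset E S" unfolding S_def by (intro dset_Int dfn_RDinf dfn_cont g)
  have "x0 \<in> S" unfolding S_def using R gen_cont[OF g x0] by simp
  then obtain d where d: "d > 0" "\<forall>y. \<bar>y - x0\<bar> < d \<longrightarrow> y \<in> S" using NB[OF dS x0] by blast
  define y where "y = x0 + d / 2"
  have xy: "x0 < y" using d(1) unfolding y_def by simp
  have inS: "t \<in> S" if "x0 \<le> t" "t \<le> y" for t using d that unfolding y_def by (auto simp: abs_if)
  define M where "M = (g y - g x0) / (y - x0) + 1"
  define G where "G u = g u - M * u" for u
  have gU: "dfun UNIV g" using g dfun_mono by blast
  have GU: "dfun UNIV G" unfolding G_def by (rule dfun_affine[OF gU]) simp
  have "G x0 \<le> G y"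
  proof (rule slope_mono[OF GU xy])
    fix t assume "x0 < t" "t \<le> y"
    then have "cont g t" using inS unfolding S_def by auto
    then show "cont G t" unfolding G_def by (rule cont_affine)
  next
    fix t assume t: "x0 \<le> t" "t < y"
    then have "RDinf g t" using inS unfolding S_def by auto
    then obtain d' where d': "d' > 0" "\<forall>h. 0 < h \<and> h < d' \<longrightarrow> M < (g (t + h) - g t) / h"
      unfolding RDinf_def by blast
    have "G t \<le> G (t + h)" if "0 < h" "h < d'" for h
    proof -
      have "M < (g (t + h) - g t) / h" using d' that by blast
      then have "M * h < g (t + h) - g t" using that(1) by (simp add: pos_less_divide_eq)
      then show ?thesis unfolding G_def by (simp add: algebra_simps)
    qed
    then show "\<exists>d>0. \<forall>h. 0 < h \<and> h < d \<longrightarrow> G t \<le> G (t + h)" using d'(1) by blast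
  qed
  then have "M * (y - x0) \<le> g y - g x0" unfolding G_def by (simp add: algebra_simps)
  then have "M \<le> (g y - g x0) / (y - x0)" using xy by (simp add: pos_le_divide_eq)
  then show False unfolding M_def by simp
qed

lemma RD_exists:
  assumes g: "dfun E g" and x0: "x0 \<notin> E"
  shows "RD g x0 (D g x0)"
proof -
  have gU: "dfun UNIV g" using g dfun_mono by blast
  have q: "dfun UNIV (\<lambda>h. (g (x0 + h) - g x0) / h)"
    unfolding dfun_iff by (intro dterm_intros dterm_app[OF gU] dterm_param) simp_all
  have n1: "\<not> RDinf g x0" by (rule no_RDinf[OF g x0])
  have n2: "\<not> RDinf (\<lambda>y. - g y) x0" by (rule no_RDinf[OF dfun_uminus[OF g] x0])
  from lim_right[OF q] n1 n2 RDinf_uminus[of g x0] have "\<exists>L. RD g x0 L"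
    unfolding RDinf_def RD_def by blast
  then obtain L where "RD g x0 L" by blast
  then show ?thesis using RD_D by metis
qed

end

lemma RD_incr:
  assumes "RD g t L" "c < L"
  shows "\<exists>d>0. \<forall>h. 0 < h \<and> h < d \<longrightarrow> g t - c * t \<le> g (t + h) - c * (t + h)"
proof -
  obtain d where d: "d > 0" "\<forall>h. 0 < h \<and> h < d \<longrightarrow> \<bar>(g (t + h) - g t) / h - L\<bar> < L - c"
    using assms unfolding RD_def limR_def by (meson diff_gt_0_iff_gt)
  have "g t - c * t \<le> g (t + h) - c * (t + h)" if h: "0 < h" "h < d" for h
  proof -
    have "c < (g (t + h) - g t) / h" using d(2) h by (auto simp: abs_less_iff)
    then have "c * h < g (t + h) - g t" using h(1) by (simp add: pos_less_divide_eq)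
    then show ?thesis by (simp add: algebra_simps)
  qed
  then show ?thesis using d(1) by blast
qed

context omin begin

lemma dset_RDfin: "dfun A g \<Longrightarrow> dset A {x. \<exists>L. RD g x L}"
  unfolding dset_def
proof -
  assume g: "dfun A g"
  have R: "dfn A (\<lambda>w. RD g (w 0) (w 1))" by (rule dfn_RD[OF g])
  have "dfn A (\<lambda>w. \<exists>L. RD g (w 1) L)"
  proof (rule dfn_ex')
    have "dfn A (\<lambda>w. RD g (w 2) (w 0))"
      using dfn_subst[OF R, where \<sigma>="\<lambda>n. if n = 0 then 2 else 0"] by simp
    then show "dfn A (\<lambda>w. RD g (w (Suc 1)) (w 0))" by (simp add: numeral_2_eq_2)
  qed
  from dfn_subst[OF this, where \<sigma>="\<lambda>n. 0"]
  show "dfn A (\<lambda>w. w 0 \<in> {x. \<exists>L. RD g x L})" by simp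
qed

end

context omE begin

lemma neg_notin: "x \<notin> E \<Longrightarrow> - x \<notin> E"
  using uminus_E by fastforce

lemma kink:
  assumes g: "dfun E g" and x0: "x0 \<notin> E"
  shows "D g x0 \<le> - D (\<lambda>x. g (- x)) (- x0)"
proof (rule ccontr)
  define g2 where "g2 = (\<lambda>x. g (- x))"
  have g2: "dfun E g2" unfolding g2_def by (rule dfun_neg[OF g])
  have mx0: "- x0 \<notin> E" by (rule neg_notin[OF x0])
  define R where "R = D g x0"
  define L where "L = - D g2 (- x0)"
  assume "\<not> D g x0 \<le> - D (\<lambda>x. g (- x)) (- x0)"
  then have RL: "L < R" unfolding R_def L_def g2_def by simp
  define c where "c = (R + L) / 2"
  define \<eta> where "\<eta> = (R - L) / 2"
  have eta: "\<eta> > 0" "R - \<eta> = c" "L + \<eta> = c" using RL unfolding \<eta>_def c_def by (simp_all add: field_simps)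
  have RDx0: "RD g x0 R" unfolding R_def by (rule RD_exists[OF g x0])
  obtain d1 where d1: "d1 > 0" "\<forall>y. \<bar>y - x0\<bar> < d1 \<longrightarrow> y \<in> {x. \<exists>L. RD g x L}"
    using NB[OF dset_RDfin[OF g] x0] RD_exists[OF g x0] by blast
  obtain d2 where d2: "d2 > 0" "\<forall>y. \<bar>y - - x0\<bar> < d2 \<longrightarrow> y \<in> {x. \<exists>L. RD g2 x L}"
    using NB[OF dset_RDfin[OF g2] mx0] RD_exists[OF g2 mx0] by blast
  obtain d3 where d3: "d3 > 0" "\<forall>y. \<bar>y - x0\<bar> < d3 \<longrightarrow> \<bar>D g y - D g x0\<bar> < \<eta>"
    using gen_cont[OF dfun_D[OF g] x0] eta(1) unfolding cont_def by blast
  obtain d4 where d4: "d4 > 0" "\<forall>y. \<bar>y - - x0\<bar> < d4 \<longrightarrow> \<bar>D g2 y - D g2 (- x0)\<bar> < \<eta>"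
    using gen_cont[OF dfun_D[OF g2] mx0] eta(1) unfolding cont_def by blast
  obtain d5 where d5: "d5 > 0" "\<forall>y. \<bar>y - x0\<bar> < d5 \<longrightarrow> y \<in> {x. cont g x}"
    using NB[OF dfn_cont[OF g] x0] gen_cont[OF g x0] by blast
  obtain dR where dR: "dR > 0" "\<forall>h. 0 < h \<and> h < dR \<longrightarrow> \<bar>(g (x0 + h) - g x0) / h - R\<bar> < \<eta>"
    using RDx0 eta(1) unfolding RD_def limR_def by blast
  define \<delta> where "\<delta> = min (min d1 d2) (min (min d3 d4) d5)"
  have \<delta>: "\<delta> > 0" "\<delta> \<le> d1" "\<delta> \<le> d2" "\<delta> \<le> d3" "\<delta> \<le> d4" "\<delta> \<le> d5"
    using d1 d2 d3 d4 d5 unfolding \<delta>_def by auto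
  have right: "RD g t (D g t) \<and> c < D g t \<and> cont g t" if t: "\<bar>t - x0\<bar> < \<delta>" for t
  proof -
    have "\<exists>L. RD g t L" using d1(2) t \<delta> by auto
    then have "RD g t (D g t)" using RD_D by metis
    moreover have "\<bar>D g t - R\<bar> < \<eta>" using d3(2) t \<delta> unfolding R_def by auto
    then have "c < D g t" using eta by (simp add: abs_less_iff)
    moreover have "cont g t" using d5(2) t \<delta> by auto
    ultimately show ?thesis by blast
  qed
  have left: "RD g2 t (D g2 t) \<and> - c < D g2 t \<and> cont g2 t" if t: "\<bar>t - - x0\<bar> < \<delta>" for t
  proof -
    have "\<exists>L. RD g2 t L" using d2(2) t \<delta> by auto
    then have "RD g2 t (D g2 t)" using RD_D by metis
    moreover have "\<bar>D g2 t - D g2 (- x0)\<bar> < \<eta>" using d4(2) t \<delta> by auto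
    then have "- c < D g2 t" using eta unfolding L_def by (simp add: abs_less_iff)
    moreover have "\<bar>- t - x0\<bar> < \<delta>" using t by (simp add: abs_minus_commute)
    then have "cont g (- t)" using d5(2) \<delta> by auto
    then have "cont g2 t" unfolding g2_def by (rule cont_neg)
    ultimately show ?thesis by blast
  qed
  define h where "h = min dR \<delta> / 2"
  have h: "0 < h" "h < dR" "h < \<delta>" using dR(1) \<delta>(1) unfolding h_def by auto
  have gU: "dfun UNIV g" using g dfun_mono by blast
  have g2U: "dfun UNIV g2" using g2 dfun_mono by blast
  have G1: "g x0 - c * x0 \<le> g (x0 + h) - c * (x0 + h)"
  proof (rule slope_mono[OF dfun_affine[OF gU] _, of c x0 "x0 + h", simplified])
    show "0 < h" by (rule h(1))
  next
    fix t assume "x0 < t" "t \<le> x0 + h"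
    then have "\<bar>t - x0\<bar> < \<delta>" using h by (simp add: abs_if)
    then show "cont (\<lambda>x. g x - c * x) t" using right cont_affine by blast
  next
    fix t assume "x0 \<le> t" "t < x0 + h"
    then have "\<bar>t - x0\<bar> < \<delta>" using h by (simp add: abs_if)
    then show "\<exists>d>0. \<forall>ha. 0 < ha \<and> ha < d \<longrightarrow> g t - c * t \<le> g (t + ha) - c * (t + ha)"
      using right RD_incr by blast
  qed
  have G2: "(\<lambda>x. g2 x - (- c) * x) (- (x0 + h)) \<le> (\<lambda>x. g2 x - (- c) * x) (- x0)"
  proof (rule slope_mono[OF dfun_affine[OF g2U UNIV_I]])
    show "- (x0 + h) < - x0" using h(1) by simp
  next
    fix t assume "- (x0 + h) < t" "t \<le> - x0"
    then have "\<bar>t - - x0\<bar> < \<delta>" using h by (simp add: abs_if)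
    then show "cont (\<lambda>x. g2 x - - c * x) t" using left cont_affine by blast
  next
    fix t assume "- (x0 + h) \<le> t" "t < - x0"
    then have "\<bar>t - - x0\<bar> < \<delta>" using h by (simp add: abs_if)
    then have "RD g2 t (D g2 t)" "- c < D g2 t" using left by blast+
    then show "\<exists>d>0. \<forall>ha. 0 < ha \<and> ha < d \<longrightarrow> g2 t - - c * t \<le> g2 (t + ha) - - c * (t + ha)"
      by (rule RD_incr)
  qed
  have "g (x0 + h) - g x0 = c * h" using G1 G2 unfolding g2_def by (simp add: algebra_simps)
  then have "(g (x0 + h) - g x0) / h = c" using h(1) by simp
  moreover have "\<bar>(g (x0 + h) - g x0) / h - R\<bar> < \<eta>" using dR(2) h by blast
  ultimately show False using eta by (simp add: abs_less_iff)
qed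

end

context omE begin

lemma gen_deriv:
  assumes f: "dfun E f" and b: "b \<notin> E"
  shows "has_deriv_at f b (D f b)"
proof -
  define f2 where "f2 = (\<lambda>x. f (- x))"
  have f2: "dfun E f2" unfolding f2_def by (rule dfun_neg[OF f])
  have mb: "- b \<notin> E" by (rule neg_notin[OF b])
  have k1: "D f b \<le> - D f2 (- b)" unfolding f2_def by (rule kink[OF f b])
  have nf: "dfun E (\<lambda>x. - f x)" by (rule dfun_uminus[OF f])
  have k2: "D (\<lambda>x. - f x) b \<le> - D (\<lambda>x. - f (- x)) (- b)" using kink[OF nf b] by simp
  have RDf: "RD f b (D f b)" by (rule RD_exists[OF f b])
  have RDf2: "RD f2 (- b) (D f2 (- b))" by (rule RD_exists[OF f2 mb])
  have "D (\<lambda>x. - f x) b = - D f b" using RD_D[OF RD_uminus[OF RDf]] .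
  moreover have "D (\<lambda>x. - f (- x)) (- b) = - D f2 (- b)"
    using RD_D[OF RD_uminus[OF RDf2]] unfolding f2_def .
  ultimately have "D f b = - D f2 (- b)" using k1 k2 by simp
  then have RDf2': "RD f2 (- b) (- D f b)" using RDf2 by simp
  show ?thesis unfolding has_deriv_at_def
  proof (intro allI impI)
    fix e :: 'u assume e: "e > 0"
    obtain d1 where d1: "d1 > 0" "\<forall>h. 0 < h \<and> h < d1 \<longrightarrow> \<bar>(f (b + h) - f b) / h - D f b\<bar> < e"
      using RDf e unfolding RD_def limR_def by blast
    obtain d2 where d2: "d2 > 0" "\<forall>h. 0 < h \<and> h < d2 \<longrightarrow> \<bar>(f2 (- b + h) - f2 (- b)) / h - - D f b\<bar> < e"
      using RDf2' e unfolding RD_def limR_def by blast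
    have "\<bar>(f x - f b) / (x - b) - D f b\<bar> < e" if x: "x \<noteq> b \<and> \<bar>x - b\<bar> < min d1 d2" for x
    proof (cases "b < x")
      case True
      then have "0 < x - b" "x - b < d1" using x by (auto simp: abs_if)
      then show ?thesis using d1(2)[rule_format, of "x - b"] by simp
    next
      case False
      then have xb: "x < b" using x by simp
      then have "0 < b - x" "b - x < d2" using x by (auto simp: abs_if)
      then have "\<bar>(f2 (- b + (b - x)) - f2 (- b)) / (b - x) - - D f b\<bar> < e" using d2(2) by blast
      then have "\<bar>(f x - f b) / (b - x) + D f b\<bar> < e" unfolding f2_def by simp
      moreover have "(f x - f b) / (x - b) = - ((f x - f b) / (b - x))"
        by (metis minus_diff_eq divide_minus_right)
      ultimately show ?thesis by (simp add: abs_minus_commute)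
    qed
    moreover have "min d1 d2 > 0" using d1 d2 by simp
    ultimately show "\<exists>d>0. \<forall>x. x \<noteq> b \<and> \<bar>x - b\<bar> < d \<longrightarrow> \<bar>(f x - f b) / (x - b) - D f b\<bar> < e" by blast
  qed
qed

end

lemma deriv_unique:
  assumes "has_deriv_at f b d1" "has_deriv_at f b (d2::'u::linordered_field)"
  shows "d1 = d2"
proof (rule ccontr)
  assume ne: "d1 \<noteq> d2"
  define e where "e = \<bar>d1 - d2\<bar> / 2"
  have "e > 0" using ne unfolding e_def by simp
  obtain r1 where r1: "r1 > 0" "\<forall>x. x \<noteq> b \<and> \<bar>x - b\<bar> < r1 \<longrightarrow> \<bar>(f x - f b) / (x - b) - d1\<bar> < e"
    using assms(1) \<open>e > 0\<close> unfolding has_deriv_at_def by blast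
  obtain r2 where r2: "r2 > 0" "\<forall>x. x \<noteq> b \<and> \<bar>x - b\<bar> < r2 \<longrightarrow> \<bar>(f x - f b) / (x - b) - d2\<bar> < e"
    using assms(2) \<open>e > 0\<close> unfolding has_deriv_at_def by blast
  define x where "x = b + min r1 r2 / 2"
  have "x \<noteq> b" "\<bar>x - b\<bar> < r1" "\<bar>x - b\<bar> < r2" using r1(1) r2(1) unfolding x_def by auto
  then have "\<bar>(f x - f b) / (x - b) - d1\<bar> < e" "\<bar>(f x - f b) / (x - b) - d2\<bar> < e" using r1 r2 by blast+
  then have "\<bar>d1 - d2\<bar> < 2 * e" by (simp add: abs_less_iff)
  then show False unfolding e_def by simp
qed

lemma deriv_RD:
  assumes "has_deriv_at f t (d::'u::linordered_field)"
  shows "RD f t d"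
  unfolding RD_def limR_def
proof (intro allI impI)
  fix e :: 'u assume "e > 0"
  then obtain r where r: "r > 0" "\<forall>x. x \<noteq> t \<and> \<bar>x - t\<bar> < r \<longrightarrow> \<bar>(f x - f t) / (x - t) - d\<bar> < e"
    using assms unfolding has_deriv_at_def by blast
  have "\<bar>(f (t + h) - f t) / h - d\<bar> < e" if "0 < h" "h < r" for h
    using r(2)[rule_format, of "t + h"] that by simp
  then show "\<exists>r>0. \<forall>h. 0 < h \<and> h < r \<longrightarrow> \<bar>(f (t + h) - f t) / h - d\<bar> < e" using r(1) by blast
qed

lemma deriv_cont:
  assumes "has_deriv_at f t (d::'u::linordered_field)"
  shows "cont f t"
  unfolding cont_def
proof (intro allI impI)
  fix e :: 'u assume e: "e > 0"
  obtain r where r: "r > 0" "\<forall>x. x \<noteq> t \<and> \<bar>x - t\<bar> < r \<longrightarrow> \<bar>(f x - f t) / (x - t) - d\<bar> < 1"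
    using assms unfolding has_deriv_at_def by (meson zero_less_one)
  define r' where "r' = min r (e / (\<bar>d\<bar> + 1))"
  have "r' > 0" using r(1) e unfolding r'_def by (simp add: add_pos_nonneg)
  moreover have "\<bar>f y - f t\<bar> < e" if y: "\<bar>y - t\<bar> < r'" for y
  proof (cases "y = t")
    case True then show ?thesis using e by simp
  next
    case False
    then have q: "\<bar>(f y - f t) / (y - t) - d\<bar> < 1" using r(2) y unfolding r'_def by auto
    have "\<bar>(f y - f t) / (y - t)\<bar> \<le> \<bar>(f y - f t) / (y - t) - d\<bar> + \<bar>d\<bar>"
      using abs_triangle_ineq[of "(f y - f t) / (y - t) - d" d] by simp
    then have "\<bar>(f y - f t) / (y - t)\<bar> < \<bar>d\<bar> + 1" using q by linarith
    have eq: "f y - f t = ((f y - f t) / (y - t)) * (y - t)" using False by simp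
    have ab: "\<bar>f y - f t\<bar> = \<bar>(f y - f t) / (y - t)\<bar> * \<bar>y - t\<bar>"
      by (subst eq) (simp only: abs_mult)
    have pos: "\<bar>y - t\<bar> > 0" using False by simp
    have "\<bar>f y - f t\<bar> < (\<bar>d\<bar> + 1) * \<bar>y - t\<bar>"
      unfolding ab by (rule mult_strict_right_mono[OF \<open>\<bar>(f y - f t) / (y - t)\<bar> < \<bar>d\<bar> + 1\<close> pos])
    also have "\<dots> \<le> (\<bar>d\<bar> + 1) * (e / (\<bar>d\<bar> + 1))"
    proof (rule mult_left_mono)
      show "\<bar>y - t\<bar> \<le> e / (\<bar>d\<bar> + 1)" using y unfolding r'_def by simp
    qed simp
    also have "\<dots> = e"
    proof -
      have "\<bar>d\<bar> + 1 \<noteq> 0" by (metis abs_ge_zero add_nonneg_eq_0_iff zero_le_one zero_neq_one)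
      then show ?thesis by simp
    qed
    finally show ?thesis .
  qed
  ultimately show "\<exists>r>0. \<forall>y. \<bar>y - t\<bar> < r \<longrightarrow> \<bar>f y - f t\<bar> < e" by blast
qed

lemma deriv_uminus:
  assumes "has_deriv_at f t (d::'u::linordered_field)"
  shows "has_deriv_at (\<lambda>x. - f x) t (- d)"
  unfolding has_deriv_at_def
proof (intro allI impI)
  fix e :: 'u assume "e > 0"
  then obtain r where r: "r > 0" "\<forall>x. x \<noteq> t \<and> \<bar>x - t\<bar> < r \<longrightarrow> \<bar>(f x - f t) / (x - t) - d\<bar> < e"
    using assms unfolding has_deriv_at_def by blast
  have "\<bar>(- f x - - f t) / (x - t) - - d\<bar> = \<bar>(f x - f t) / (x - t) - d\<bar>" for x
  proof -
    have e1: "- f x - - f t = - (f x - f t)" by simp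
    have "(- f x - - f t) / (x - t) = - ((f x - f t) / (x - t))" by (simp only: e1 minus_divide_left)
    then have "(- f x - - f t) / (x - t) - - d = - ((f x - f t) / (x - t) - d)" by simp
    then show ?thesis by (simp only: abs_minus_cancel)
  qed
  then show "\<exists>r>0. \<forall>x. x \<noteq> t \<and> \<bar>x - t\<bar> < r \<longrightarrow> \<bar>(- f x - - f t) / (x - t) - - d\<bar> < e"
    using r by auto
qed

context omin begin

lemma dfn_deriv: "dfun A F \<Longrightarrow> dfn A (\<lambda>w. has_deriv_at F (w 0) (w 1))"
proof -
  assume F: "dfun A F"
  have "dfn A (\<lambda>w. \<forall>e. 0 < e \<longrightarrow> (\<exists>r. 0 < r \<and> (\<forall>x. \<not> x = w 0 \<and> \<bar>x - w 0\<bar> < r \<longrightarrow>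
      \<bar>(F x - F (w 0)) / (x - w 0) - w 1\<bar> < e)))"
    by (intro dfn_intros dterm_intros dterm_app[OF F])
  then show ?thesis by (rule dfn_cong) (simp add: has_deriv_at_def)
qed

lemma mvt_lower:
  assumes F: "dfun UNIV F" and xy: "x < y"
    and h: "\<And>t. x \<le> t \<Longrightarrow> t \<le> y \<Longrightarrow> \<exists>d. has_deriv_at F t d \<and> c < d"
  shows "c * (y - x) \<le> F y - F x"
proof -
  have "(\<lambda>u. F u - c * u) x \<le> (\<lambda>u. F u - c * u) y"
  proof (rule slope_mono[OF dfun_affine[OF F UNIV_I] xy])
    fix t assume t: "x < t" "t \<le> y"
    have "x \<le> t" using t by simp
    then obtain d where "has_deriv_at F t d" using h t(2) by blast
    then show "cont (\<lambda>u. F u - c * u) t" by (intro cont_affine deriv_cont)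
  next
    fix t assume t: "x \<le> t" "t < y"
    have "t \<le> y" using t by simp
    then obtain d where "has_deriv_at F t d" "c < d" using h t(1) by blast
    then show "\<exists>d>0. \<forall>h. 0 < h \<and> h < d \<longrightarrow> F t - c * t \<le> F (t + h) - c * (t + h)"
      using RD_incr deriv_RD by blast
  qed
  then show ?thesis by (simp add: algebra_simps)
qed

end

context omin begin

lemma dcl_dterm: "y \<in> dcl I A \<Longrightarrow> A \<noteq> {} \<Longrightarrow> dterm A (\<lambda>w. y)"
  unfolding dcl_def dterm_def
  using dfn_of_rel[of A 1 "\<lambda>xs. xs ! 0 = y"] by simp

lemma dterm_dcl: "dterm A (\<lambda>w. y) \<Longrightarrow> y \<in> dcl I A"
  unfolding dcl_def dterm_def using rel_of_dfn1[of A "\<lambda>x. x = y"] by simp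

end

locale omC = omE I E for I :: "'r \<Rightarrow> ('u::linordered_field) list \<Rightarrow> bool" and E +
  fixes Ov :: "'u set" and b :: 'u and f :: "'u \<Rightarrow> 'u"
  assumes conv: "T_convex I E Ov"
    and b_notin: "b \<notin> E"
    and b_above: "\<forall>u\<in>Ov. u < b"
    and b_below: "\<forall>e\<in>E. (\<forall>u\<in>Ov. u < e) \<longrightarrow> b < e"
    and f_def: "definable_fun UNIV I E f"
begin

lemma OvE: "Ov \<subseteq> E" and Ov_ne: "Ov \<noteq> E" and Ov0: "0 \<in> Ov" and Ov1: "1 \<in> Ov"
  and Ov_add: "x \<in> Ov \<Longrightarrow> y \<in> Ov \<Longrightarrow> x + y \<in> Ov"
  and Ov_diff: "x \<in> Ov \<Longrightarrow> y \<in> Ov \<Longrightarrow> x - y \<in> Ov"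
  and Ov_mult: "x \<in> Ov \<Longrightarrow> y \<in> Ov \<Longrightarrow> x * y \<in> Ov"
  and Ov_conv: "x \<in> Ov \<Longrightarrow> y \<in> Ov \<Longrightarrow> z \<in> E \<Longrightarrow> x \<le> z \<Longrightarrow> z \<le> y \<Longrightarrow> z \<in> Ov"
  using conv unfolding T_convex_def by blast+

lemma Ov_uminus: "x \<in> Ov \<Longrightarrow> - x \<in> Ov"
  using Ov_diff[OF Ov0] by fastforce

lemma Ov_abs: "x \<in> Ov \<Longrightarrow> \<bar>x\<bar> \<in> Ov"
  by (cases "0 \<le> x") (auto simp: Ov_uminus)

lemma Ov_two: "2 \<in> Ov" using Ov_add[OF Ov1 Ov1] by (simp add: one_add_one)

lemma E_op: "x \<in> E \<Longrightarrow> y \<in> E \<Longrightarrow> x + y \<in> E \<and> x - y \<in> E \<and> x * y \<in> E \<and> x / y \<in> E \<and> inverse x \<in> E"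
  by (intro conjI; rule const_E; intro dterm_intros dterm_param; simp)

lemma two_E: "2 \<in> E" using OvE Ov_two by blast

definition big :: "'u \<Rightarrow> bool" where "big e \<longleftrightarrow> e \<in> E \<and> (\<forall>u\<in>Ov. u < e)"

lemma big_exists: "\<exists>e. big e"
proof -
  obtain e0 where e0: "e0 \<in> E" "e0 \<notin> Ov" using OvE Ov_ne by blast
  have "\<bar>e0\<bar> \<in> E" using e0(1) by (cases "0 \<le> e0") (auto intro: uminus_E)
  moreover have "u < \<bar>e0\<bar>" if u: "u \<in> Ov" for u
  proof (rule ccontr)
    assume "\<not> u < \<bar>e0\<bar>"
    then have "- u \<le> e0" "e0 \<le> u" by auto
    then have "e0 \<in> Ov" using Ov_conv[OF Ov_uminus[OF u] u e0(1)] by blast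
    then show False using e0(2) by simp
  qed
  ultimately show ?thesis unfolding big_def by blast
qed

lemma big_pos: "big e \<Longrightarrow> 1 < e"
  unfolding big_def using Ov1 by blast

lemma big_half: "big e \<Longrightarrow> big (e / 2)"
  unfolding big_def
proof (intro conjI ballI)
  assume e: "e \<in> E \<and> (\<forall>u\<in>Ov. u < e)"
  show "e / 2 \<in> E" using E_op[OF _ two_E] e by blast
  fix u assume "u \<in> Ov"
  then have "u + u < e" using e Ov_add by blast
  then show "u < e / 2" by (simp add: field_simps)
qed

lemma b_big: "big e \<Longrightarrow> b < e" using b_below unfolding big_def by blast

lemma b_gt: "u \<in> Ov \<Longrightarrow> u < b" using b_above by blast

lemma b_pos: "0 < b" using b_gt[OF Ov0] .

lemma fD: "dfun E f" by (rule dfun_of_definable_fun[OF f_def E_ne])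

lemma core:
  assumes F: "dfun E F" and r: "r \<in> E" "\<bar>F b\<bar> \<le> r" and c: "c \<in> E"
    and dd: "has_deriv_at F b dd" "c < dd"
  shows "c * b \<le> 2 * r"
proof -
  define X where "X = {x. \<bar>F x\<bar> \<le> r} \<inter> {x. \<exists>d. has_deriv_at F x d \<and> c < d}"
  have dX: "dset E X" unfolding X_def
  proof (rule dset_Int)
    show "dset E {x. \<bar>F x\<bar> \<le> r}" unfolding dset_def
      by (rule dfn_cong[of _ "\<lambda>w. \<bar>F (w 0)\<bar> \<le> r"]) (intro dfn_intros dterm_intros dterm_app[OF F] dterm_param r, simp)
    have H: "dfn E (\<lambda>w. has_deriv_at F (w 0) (w 1))" by (rule dfn_deriv[OF F])
    have "dfn E (\<lambda>w. \<exists>d. has_deriv_at F (w 0) d \<and> c < d)"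
    proof (rule dfn_ex', rule dfn_conj)
      show "dfn E (\<lambda>w. has_deriv_at F (w (Suc 0)) (w 0))"
        using dfn_subst[OF H, where \<sigma>="\<lambda>n. if n = 0 then 1 else 0"] by simp
      show "dfn E (\<lambda>w. c < w 0)" by (intro dfn_intros dterm_intros dterm_param c)
    qed
    then show "dset E {x. \<exists>d. has_deriv_at F x d \<and> c < d}" unfolding dset_def by (rule dfn_cong) simp
  qed
  have bX: "b \<in> X" unfolding X_def using r(2) dd by blast
  have sub: "t \<in> X" if t: "b \<le> t" "t \<le> 2 * b" for t
  proof -
    from EL[OF dX b_notin bX]
    show ?thesis
    proof (elim disjE bexE conjE)
      assume "\<forall>y. b \<le> y \<longrightarrow> y \<in> X" then show ?thesis using t by blast
    next
      fix c1 assume c1: "c1 \<in> E" "b < c1" "\<forall>y. b \<le> y \<and> y < c1 \<longrightarrow> y \<in> X"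
      have "big c1" unfolding big_def using c1 b_gt by force
      then have "b < c1 / 2" using big_half b_big by blast
      then have "t < c1" using t by simp
      then show ?thesis using c1(3) t by blast
    qed
  qed
  have FU: "dfun UNIV F" using F dfun_mono by blast
  have "c * (2 * b - b) \<le> F (2 * b) - F b"
  proof (rule mvt_lower[OF FU])
    show "b < 2 * b" using b_pos by simp
    fix t assume "b \<le> t" "t \<le> 2 * b"
    then have "t \<in> X" using sub by blast
    then show "\<exists>d. has_deriv_at F t d \<and> c < d" unfolding X_def by blast
  qed
  moreover have "\<bar>F (2 * b)\<bar> \<le> r" using sub[of "2 * b"] b_pos unfolding X_def by simp
  ultimately show ?thesis using r(2) by (simp add: abs_le_iff)
qed

end

context omC begin

abbreviation "A0 \<equiv> insert b E"

lemma A0_ne: "A0 \<noteq> {}" by simp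

lemma dcl_inverse: "y \<in> dcl I A0 \<Longrightarrow> inverse y \<in> dcl I A0"
  by (rule dterm_dcl) (intro dterm_intros dcl_dterm A0_ne)

lemma d_deriv: "has_deriv_at f b (D f b)" by (rule gen_deriv[OF fD b_notin])

lemma d_dcl: "D f b \<in> dcl I A0"
proof (rule dterm_dcl)
  have fA: "dfun A0 f" using fD dfun_mono by blast
  have "dfn A0 (\<lambda>w. has_deriv_at f b (w 0))"
    using dfn_rel2[OF dfn_deriv[OF fA] dterm_param[of b A0] dterm_var[of A0 0]] by simp
  then show "dterm A0 (\<lambda>w. D f b)" unfolding dterm_def
  proof (rule dfn_cong)
    fix w :: "nat \<Rightarrow> 'u"
    show "has_deriv_at f b (w 0) = (w 0 = D f b)"
    proof
      assume "has_deriv_at f b (w 0)" then show "w 0 = D f b" using deriv_unique d_deriv by blast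
    next
      assume "w 0 = D f b" then show "has_deriv_at f b (w 0)" using d_deriv by simp
    qed
  qed
qed

lemma big_inv: "big e \<Longrightarrow> 0 < inverse e \<and> inverse e < 1"
proof -
  assume "big e"
  then have "1 < e" by (rule big_pos)
  then show ?thesis by (simp add: inverse_less_1_iff)
qed

lemma part_core:
  assumes r: "r \<in> E" "\<bar>f b\<bar> \<le> r" and c: "c \<in> E" "c < \<bar>D f b\<bar>"
  shows "c * b \<le> 2 * r"
proof (cases "c < D f b")
  case True
  show ?thesis by (rule core[OF fD r c(1) d_deriv True])
next
  case False
  then have "c < - D f b" using c(2) by (simp add: abs_if split: if_splits)
  moreover have "dfun E (\<lambda>x. - f x)" by (rule dfun_uminus[OF fD])
  ultimately show ?thesis using core[of "\<lambda>x. - f x" r c "- D f b"] r c(1) deriv_uminus[OF d_deriv] by simp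
qed

lemma part1:
  assumes H: "f b \<in> max_ideal (Ob I E Ov b)"
  shows "D f b \<in> max_ideal (Ob I E Ov b)"
proof -
  have fb: "f b \<in> dcl I A0" "\<forall>z\<in>Ob I E Ov b. f b * z \<noteq> 1"
    using H unfolding max_ideal_def Ob_def by auto
  obtain e where e: "big e" "\<bar>f b\<bar> \<le> inverse e"
  proof (cases "f b = 0")
    case True
    obtain e0 where "big e0" using big_exists by blast
    then show ?thesis using that[of e0] True big_inv by force
  next
    case False
    define z where "z = inverse (f b)"
    have "z \<in> dcl I A0" unfolding z_def by (rule dcl_inverse[OF fb(1)])
    moreover have "f b * z = 1" using False unfolding z_def by simp
    ultimately have "z \<notin> Ob I E Ov b" using fb(2) by blast
    then obtain e where "e \<in> E" "\<forall>u\<in>Ov. u < e" "\<not> \<bar>z\<bar> < e"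
      using \<open>z \<in> dcl I A0\<close> unfolding Ob_def by blast
    then have be: "big e" "e \<le> \<bar>z\<bar>" unfolding big_def by auto
    have "0 < e" using big_pos[OF be(1)] by simp
    have "\<bar>z\<bar> = inverse \<bar>f b\<bar>" unfolding z_def by (simp add: abs_inverse)
    then have "e \<le> inverse \<bar>f b\<bar>" using be(2) by simp
    then have "inverse (inverse \<bar>f b\<bar>) \<le> inverse e" using \<open>0 < e\<close> by (rule le_imp_inverse_le)
    then have "\<bar>f b\<bar> \<le> inverse e" by simp
    then show ?thesis using that be(1) by blast
  qed
  have eE: "e \<in> E" "0 < e" using e(1) big_pos unfolding big_def by fastforce+
  have ieE: "inverse e \<in> E" using E_op[OF eE(1) eE(1)] by blast
  have dle: "\<bar>D f b\<bar> \<le> inverse e"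
  proof (rule ccontr)
    assume "\<not> \<bar>D f b\<bar> \<le> inverse e"
    then have "inverse e < \<bar>D f b\<bar>" by simp
    then have "inverse e * b \<le> 2 * inverse e" using part_core[OF ieE e(2) ieE] by blast
    then have "b \<le> 2" using eE(2) by (simp add: mult.commute)
    then show False using b_gt[OF Ov_two] by simp
  qed
  have ie1: "inverse e < 1" using big_inv[OF e(1)] by blast
  have "D f b \<in> Ob I E Ov b" unfolding Ob_def
  proof (intro CollectI conjI ballI impI)
    show "D f b \<in> dcl I A0" by (rule d_dcl)
    fix e' assume "e' \<in> E" "\<forall>u\<in>Ov. u < e'"
    then have "1 < e'" using Ov1 by blast
    then show "\<bar>D f b\<bar> < e'" using dle ie1 by simp
  qed
  moreover have "D f b * z \<noteq> 1" if z: "z \<in> Ob I E Ov b" for z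
  proof
    assume dz: "D f b * z = 1"
    have "\<bar>z\<bar> < e" using z e(1) unfolding Ob_def big_def by blast
    have "1 = \<bar>D f b\<bar> * \<bar>z\<bar>" using dz by (metis abs_mult abs_one)
    also have "\<dots> \<le> inverse e * \<bar>z\<bar>" using dle by (simp add: mult_right_mono)
    also have "\<dots> < inverse e * e" using \<open>\<bar>z\<bar> < e\<close> eE(2) by (intro mult_strict_left_mono) simp_all
    also have "\<dots> = 1" using eE(2) by simp
    finally show False by simp
  qed
  ultimately show ?thesis unfolding max_ideal_def by blast
qed

lemma part2:
  assumes H: "f b \<in> max_ideal (Ob_minus I E Ov b)"
  shows "D f b \<in> max_ideal (Ob_minus I E Ov b)"
proof -
  have fb: "f b \<in> dcl I A0" "\<forall>z\<in>Ob_minus I E Ov b. f b * z \<noteq> 1"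
    using H unfolding max_ideal_def Ob_minus_def by auto
  have small_fb: "\<bar>f b\<bar> * u < 1" if u: "u \<in> Ov" "0 < u" for u
  proof (rule ccontr)
    assume "\<not> \<bar>f b\<bar> * u < 1"
    then have ge: "1 \<le> \<bar>f b\<bar> * u" by simp
    then have "f b \<noteq> 0" by auto
    define z where "z = inverse (f b)"
    have "z \<in> dcl I A0" unfolding z_def by (rule dcl_inverse[OF fb(1)])
    have "\<bar>z\<bar> \<le> u"
    proof -
      have "\<bar>z\<bar> = inverse \<bar>f b\<bar>" unfolding z_def by (simp add: abs_inverse)
      also have "\<dots> \<le> u" using ge \<open>f b \<noteq> 0\<close> by (simp add: field_simps)
      finally show ?thesis .
    qed
    then have "- u \<le> z" "z \<le> u" by (auto simp: abs_le_iff)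
    then have "z \<in> Ob_minus I E Ov b" unfolding Ob_minus_def
      using \<open>z \<in> dcl I A0\<close> Ov_uminus[OF u(1)] u(1) by blast
    moreover have "f b * z = 1" using \<open>f b \<noteq> 0\<close> unfolding z_def by simp
    ultimately show False using fb(2) by blast
  qed
  have small_d: "\<bar>D f b\<bar> * u < 1" if u: "u \<in> Ov" "0 < u" for u
  proof (rule ccontr)
    assume "\<not> \<bar>D f b\<bar> * u < 1"
    then have ge: "1 \<le> \<bar>D f b\<bar> * u" by simp
    have uE: "u \<in> E" using u OvE by blast
    have u4: "4 * u \<in> Ov"
    proof -
      have "2 * u \<in> Ov" using Ov_mult[OF Ov_two u(1)] .
      then show ?thesis using Ov_mult[OF Ov_two] by (metis mult.assoc numeral_Bit0_eq_double Ov_two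
            mult_2 numeral_times_numeral semiring_norm(12))
    qed
    define r where "r = inverse (4 * u)"
    define c where "c = inverse (2 * u)"
    have rE: "r \<in> E" unfolding r_def using E_op[OF OvE[THEN subsetD, OF u4] uE] by blast
    have cE: "c \<in> E" unfolding c_def using E_op[OF OvE[THEN subsetD, OF Ov_mult[OF Ov_two u(1)]] uE] by blast
    have "\<bar>f b\<bar> * (4 * u) < 1" using small_fb[OF u4] u(2) by simp
    then have fr: "\<bar>f b\<bar> \<le> r" unfolding r_def using u(2) by (simp add: field_simps)
    have "c < \<bar>D f b\<bar>"
    proof -
      have "inverse u \<le> \<bar>D f b\<bar>" using ge u(2) by (simp add: field_simps)
      moreover have "c < inverse u" unfolding c_def using u(2) by (simp add: field_simps)
      ultimately show ?thesis by simp
    qed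
    then have "c * b \<le> 2 * r" using part_core[OF rE fr cE] by blast
    then have "b / (2 * u) \<le> 2 / (4 * u)" unfolding c_def r_def by (simp add: field_simps)
    then have "b \<le> 1" using u(2) by (simp add: field_simps)
    then show False using b_gt[OF Ov1] by simp
  qed
  have "D f b \<in> Ob_minus I E Ov b" unfolding Ob_minus_def
  proof (intro CollectI conjI)
    show "D f b \<in> dcl I A0" by (rule d_dcl)
    have "\<bar>D f b\<bar> < 1" using small_d[OF Ov1] by simp
    then show "\<exists>o1\<in>Ov. \<exists>o2\<in>Ov. o1 \<le> D f b \<and> D f b \<le> o2"
      using Ov1 Ov_uminus[OF Ov1] by (intro bexI[of _ "- 1"] bexI[of _ 1]) (auto simp: abs_less_iff)
  qed
  moreover have "D f b * z \<noteq> 1" if z: "z \<in> Ob_minus I E Ov b" for z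
  proof
    assume dz: "D f b * z = 1"
    obtain o1 o2 where o: "o1 \<in> Ov" "o2 \<in> Ov" "o1 \<le> z" "z \<le> o2" using z unfolding Ob_minus_def by blast
    define u where "u = \<bar>o1\<bar> + \<bar>o2\<bar> + 1"
    have uO: "u \<in> Ov" unfolding u_def by (intro Ov_add Ov_abs o Ov1)
    have "0 < u" unfolding u_def by (simp add: add_nonneg_pos)
    have zu: "\<bar>z\<bar> \<le> u" using o unfolding u_def by (simp add: abs_le_iff) linarith
    have "1 = \<bar>D f b\<bar> * \<bar>z\<bar>" using dz by (metis abs_mult abs_one)
    also have "\<dots> \<le> \<bar>D f b\<bar> * u" using zu by (simp add: mult_left_mono)
    also have "\<dots> < 1" by (rule small_d[OF uO \<open>0 < u\<close>])
    finally show False by simp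
  qed
  ultimately show ?thesis unfolding max_ideal_def by blast
qed

end

theorem lemma2p24:
  fixes I :: "'r \<Rightarrow> ('u::linordered_field) list \<Rightarrow> bool"
    and E Ov :: "'u set" and b :: 'u and f :: "'u \<Rightarrow> 'u"
  assumes lt_def: "definable_rel UNIV I {} 2 (\<lambda>xs. xs ! 0 < xs ! 1)"
    and add_def: "definable_rel UNIV I {} 3 (\<lambda>xs. xs ! 2 = xs ! 0 + xs ! 1)"
    and mult_def: "definable_rel UNIV I {} 3 (\<lambda>xs. xs ! 2 = xs ! 0 * xs ! 1)"
    and omin_U: "o_minimal UNIV I"
    and omin_E: "o_minimal E I"
    and elem: "elementary_sub I E"
    and conv: "T_convex I E Ov"
    and b_notin: "b \<notin> E"
    and b_above: "\<forall>u\<in>Ov. u < b"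
    and b_below: "\<forall>e\<in>E. (\<forall>u\<in>Ov. u < e) \<longrightarrow> b < e"
    and f_def: "definable_fun UNIV I E f"
  shows "(f b \<in> max_ideal (Ob I E Ov b) \<longrightarrow>
            (\<exists>d. has_deriv_at f b d \<and> d \<in> max_ideal (Ob I E Ov b))) \<and>
         (f b \<in> max_ideal (Ob_minus I E Ov b) \<longrightarrow>
            (\<exists>d. has_deriv_at f b d \<and> d \<in> max_ideal (Ob_minus I E Ov b)))"
proof -
  interpret C: omC I E Ov b f
    by unfold_locales (fact lt_def add_def mult_def omin_U elem conv b_notin b_above b_below f_def)+
  show ?thesis using C.part1 C.part2 C.d_deriv by blast
qed

end
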